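(* Let $n\ge1$ and $F_n=F(1)\otimes\cdots\otimes F(n)\subseteq\mathbb{S}_n$. Then: (1) The centre of $\mathbb{S}_n$ is $K$. (2) For every nonzero $a\in\mathbb{S}_n$ one has $F_na\neq0$ and $aF_n\ne0$. (3) $F_n$ is the smallest nonzero ideal of $\mathbb{S}_n$, i.e. it is contained in every nonzero ideal. Moreover, $F_n^2=F_n$, and $F_n$ is an essential left and right submodule of $\mathbb{S}_n$. $F_n$ is the socle of $\mathbb{S}_n$ as a left module and as a right module, $F_n$ is the socle of the $\mathbb{S}_n$-bimodule $\mathbb{S}_n$, and $F_n$ is a simple $\mathbb{S}_n$-bimodule. (4) $\mathbb{S}_n$ is a prime algebra. (5) Every nonzero ideal of $\mathbb{S}_n$ is an essential left and right submodule of $\mathbb{S}_n$.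
   Context: $K$ is a field. $\mathbb{S}_n$ is the $K$-algebra generated by $x_1,\dots,x_n,y_1,\dots,y_n$ subject to the defining relations $y_ix_i=1$ for all $i$, and $[x_i,y_j]=[x_i,x_j]=[y_i,y_j]=0$ for all $i\ne j$. For each $i$, $\mathbb{S}_1(i)$ is the subalgebra generated by $x_i,y_i$, and $\mathbb{S}_n=\mathbb{S}_1(1)\otimes\cdots\otimes\mathbb{S}_1(n)$. $F(i)=\bigoplus_{k,l\in\mathbb N}K(x_i^ky_i^l-x_i^{k+1}y_i^{l+1})$, an ideal of $\mathbb{S}_1(i)$. *)

theory Defs
  imports Main
begin

text \<open>
  S_n = S_1(1) (x) ... (x) S_1(n), and S_1 = K<x,y | yx = 1> has the K-basis
  x^k y^l (k,l in N) with (x^a y^b)(x^c y^d) = x^(a + (c-b)^+) y^(d + (b-c)^+),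
  i.e. S_1 is the monoid algebra of the bicyclic monoid.  Hence S_n is the
  monoid algebra of the n-th power of the bicyclic monoid.  A word
  x^k y^l := prod_i x_i^(k i) y_i^(l i) is indexed by a pair of functions
  (k, l) :: (nat => nat) x (nat => nat), vanishing outside {0..<n}
  (variables are indexed 0..n-1 instead of 1..n).
\<close>

type_synonym word = "(nat \<Rightarrow> nat) \<times> (nat \<Rightarrow> nat)"

definition wmul :: "word \<Rightarrow> word \<Rightarrow> word" where
  "wmul u v = (\<lambda>i. fst u i + (fst v i - snd u i), \<lambda>i. snd v i + (snd u i - fst v i))"

definition words :: "nat \<Rightarrow> word set" where
  "words n = {(k, l). \<forall>i\<ge>n. k i = 0 \<and> l i = 0}"

definition supp :: "(word \<Rightarrow> 'k::zero) \<Rightarrow> word set" where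
  "supp f = {w. f w \<noteq> 0}"

definition Sn :: "nat \<Rightarrow> (word \<Rightarrow> 'k::field) set" where
  "Sn n = {f. finite (supp f) \<and> supp f \<subseteq> words n}"

definition szero :: "word \<Rightarrow> 'k::field" where
  "szero = (\<lambda>w. 0)"

definition sone :: "word \<Rightarrow> 'k::field" where
  "sone = (\<lambda>w. if w = (\<lambda>i. 0, \<lambda>i. 0) then 1 else 0)"

definition sadd :: "(word \<Rightarrow> 'k::field) \<Rightarrow> (word \<Rightarrow> 'k) \<Rightarrow> (word \<Rightarrow> 'k)" where
  "sadd f g = (\<lambda>w. f w + g w)"

definition ssub :: "(word \<Rightarrow> 'k::field) \<Rightarrow> (word \<Rightarrow> 'k) \<Rightarrow> (word \<Rightarrow> 'k)" where
  "ssub f g = (\<lambda>w. f w - g w)"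

definition sscale :: "'k::field \<Rightarrow> (word \<Rightarrow> 'k) \<Rightarrow> (word \<Rightarrow> 'k)" where
  "sscale c f = (\<lambda>w. c * f w)"

definition smult :: "(word \<Rightarrow> 'k::field) \<Rightarrow> (word \<Rightarrow> 'k) \<Rightarrow> (word \<Rightarrow> 'k)" where
  "smult f g = (\<lambda>w. \<Sum>p \<in> supp f \<times> supp g. if wmul (fst p) (snd p) = w then f (fst p) * g (snd p) else 0)"

definition spow :: "(word \<Rightarrow> 'k::field) \<Rightarrow> nat \<Rightarrow> (word \<Rightarrow> 'k)" where
  "spow a k = ((smult a) ^^ k) sone"

definition X :: "nat \<Rightarrow> (word \<Rightarrow> 'k::field)" where
  "X i = (\<lambda>w. if w = ((\<lambda>j. if j = i then 1 else 0), (\<lambda>j. 0)) then 1 else 0)"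

definition Y :: "nat \<Rightarrow> (word \<Rightarrow> 'k::field)" where
  "Y i = (\<lambda>w. if w = ((\<lambda>j. 0), (\<lambda>j. if j = i then 1 else 0)) then 1 else 0)"

inductive_set sspan :: "(word \<Rightarrow> 'k::field) set \<Rightarrow> (word \<Rightarrow> 'k) set" for A where
  zero: "szero \<in> sspan A"
| base: "a \<in> A \<Longrightarrow> a \<in> sspan A"
| add: "a \<in> sspan A \<Longrightarrow> b \<in> sspan A \<Longrightarrow> sadd a b \<in> sspan A"
| scale: "a \<in> sspan A \<Longrightarrow> sscale c a \<in> sspan A"

definition Fi :: "nat \<Rightarrow> (word \<Rightarrow> 'k::field) set" where
  "Fi i = sspan {ssub (smult (spow (X i) k) (spow (Y i) l))
                       (smult (spow (X i) (Suc k)) (spow (Y i) (Suc l))) | k l. True}"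

text \<open>F_n = F(1) (x) ... (x) F(n) inside S_n: span of products f_1 ... f_n, f_i in F(i).\<close>
definition Fn :: "nat \<Rightarrow> (word \<Rightarrow> 'k::field) set" where
  "Fn n = sspan {foldr smult (map f [0..<n]) sone | f. \<forall>i<n. f i \<in> Fi i}"

definition centre :: "nat \<Rightarrow> (word \<Rightarrow> 'k::field) set" where
  "centre n = {a \<in> Sn n. \<forall>b \<in> Sn n. smult a b = smult b a}"

text \<open>Left / right submodules of S_n (= left / right ideals), two-sided ideals (= sub-bimodules).\<close>
definition left_ideal :: "nat \<Rightarrow> (word \<Rightarrow> 'k::field) set \<Rightarrow> bool" where
  "left_ideal n I \<longleftrightarrow> I \<subseteq> Sn n \<and> szero \<in> I \<and> (\<forall>a\<in>I. \<forall>b\<in>I. sadd a b \<in> I)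
      \<and> (\<forall>s\<in>Sn n. \<forall>a\<in>I. smult s a \<in> I)"

definition right_ideal :: "nat \<Rightarrow> (word \<Rightarrow> 'k::field) set \<Rightarrow> bool" where
  "right_ideal n I \<longleftrightarrow> I \<subseteq> Sn n \<and> szero \<in> I \<and> (\<forall>a\<in>I. \<forall>b\<in>I. sadd a b \<in> I)
      \<and> (\<forall>s\<in>Sn n. \<forall>a\<in>I. smult a s \<in> I)"

definition ideal :: "nat \<Rightarrow> (word \<Rightarrow> 'k::field) set \<Rightarrow> bool" where
  "ideal n I \<longleftrightarrow> left_ideal n I \<and> right_ideal n I"

definition setprod :: "(word \<Rightarrow> 'k::field) set \<Rightarrow> (word \<Rightarrow> 'k) set \<Rightarrow> (word \<Rightarrow> 'k) set" where
  "setprod A B = sspan {smult a b | a b. a \<in> A \<and> b \<in> B}"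

definition essential_left :: "nat \<Rightarrow> (word \<Rightarrow> 'k::field) set \<Rightarrow> bool" where
  "essential_left n M \<longleftrightarrow> left_ideal n M \<and>
     (\<forall>N. left_ideal n N \<and> N \<noteq> {szero} \<longrightarrow> M \<inter> N \<noteq> {szero})"

definition essential_right :: "nat \<Rightarrow> (word \<Rightarrow> 'k::field) set \<Rightarrow> bool" where
  "essential_right n M \<longleftrightarrow> right_ideal n M \<and>
     (\<forall>N. right_ideal n N \<and> N \<noteq> {szero} \<longrightarrow> M \<inter> N \<noteq> {szero})"

definition simple_left :: "nat \<Rightarrow> (word \<Rightarrow> 'k::field) set \<Rightarrow> bool" where
  "simple_left n M \<longleftrightarrow> left_ideal n M \<and> M \<noteq> {szero} \<and>
     (\<forall>N. left_ideal n N \<and> N \<subseteq> M \<longrightarrow> N = {szero} \<or> N = M)"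

definition simple_right :: "nat \<Rightarrow> (word \<Rightarrow> 'k::field) set \<Rightarrow> bool" where
  "simple_right n M \<longleftrightarrow> right_ideal n M \<and> M \<noteq> {szero} \<and>
     (\<forall>N. right_ideal n N \<and> N \<subseteq> M \<longrightarrow> N = {szero} \<or> N = M)"

definition simple_bimod :: "nat \<Rightarrow> (word \<Rightarrow> 'k::field) set \<Rightarrow> bool" where
  "simple_bimod n M \<longleftrightarrow> ideal n M \<and> M \<noteq> {szero} \<and>
     (\<forall>N. ideal n N \<and> N \<subseteq> M \<longrightarrow> N = {szero} \<or> N = M)"

definition soc_left :: "nat \<Rightarrow> (word \<Rightarrow> 'k::field) set" where
  "soc_left n = sspan (\<Union>{M. simple_left n M})"

definition soc_right :: "nat \<Rightarrow> (word \<Rightarrow> 'k::field) set" where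
  "soc_right n = sspan (\<Union>{M. simple_right n M})"

definition soc_bimod :: "nat \<Rightarrow> (word \<Rightarrow> 'k::field) set" where
  "soc_bimod n = sspan (\<Union>{M. simple_bimod n M})"

definition prime_alg :: "nat \<Rightarrow> ('k::field) itself \<Rightarrow> bool" where
  "prime_alg n _ \<longleftrightarrow> (\<forall>I J :: (word \<Rightarrow> 'k) set. ideal n I \<and> ideal n J \<and> setprod I J = {szero}
      \<longrightarrow> I = {szero} \<or> J = {szero})"

end

theory Submission
  imports Defs
begin


definition dl :: "word \<Rightarrow> word \<Rightarrow> 'k::field" where
  "dl u = (\<lambda>v. if v = u then 1 else 0)"

definition FS :: "(word \<Rightarrow> 'k::field) set" where
  "FS = {f. finite (supp f)}"

abbreviation zz :: "nat \<Rightarrow> nat" where "zz \<equiv> (\<lambda>i. 0)"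

lemma wmul_assoc: "wmul (wmul u v) t = wmul u (wmul v t)"
  unfolding wmul_def by (auto simp: fun_eq_iff)

lemma smult_expand:
  assumes "finite A" "finite B" "supp f \<subseteq> A" "supp g \<subseteq> B"
  shows "smult f g w = (\<Sum>u\<in>A. \<Sum>v\<in>B. if wmul u v = w then f u * g v else 0)"
proof -
  have "smult f g w = (\<Sum>p\<in>supp f \<times> supp g. if wmul (fst p) (snd p) = w then f (fst p) * g (snd p) else 0)"
    by (simp add: smult_def)
  also have "\<dots> = (\<Sum>p\<in>A \<times> B. if wmul (fst p) (snd p) = w then f (fst p) * g (snd p) else 0)"
    apply (rule sum.mono_neutral_left)
    using assms by (auto simp: supp_def)
  also have "\<dots> = (\<Sum>u\<in>A. \<Sum>v\<in>B. if wmul u v = w then f u * g v else 0)"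
    by (simp add: sum.cartesian_product split_beta)
  finally show ?thesis .
qed

lemma supp_smult: "supp (smult f g) \<subseteq> (\<lambda>p. wmul (fst p) (snd p)) ` (supp f \<times> supp g)"
proof
  fix w assume "w \<in> supp (smult f g)"
  hence "(\<Sum>p\<in>supp f \<times> supp g. if wmul (fst p) (snd p) = w then f (fst p) * g (snd p) else 0) \<noteq> 0"
    by (simp add: supp_def smult_def)
  then obtain p where "p \<in> supp f \<times> supp g" "(if wmul (fst p) (snd p) = w then f (fst p) * g (snd p) else 0) \<noteq> 0"
    by (rule sum.not_neutral_contains_not_neutral)
  hence "p \<in> supp f \<times> supp g" "wmul (fst p) (snd p) = w" by (auto split: if_splits)
  thus "w \<in> (\<lambda>p. wmul (fst p) (snd p)) ` (supp f \<times> supp g)" by blast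
qed

lemma FS_smult[simp]: "f \<in> FS \<Longrightarrow> g \<in> FS \<Longrightarrow> smult f g \<in> FS"
proof -
  assume "f \<in> FS" "g \<in> FS"
  hence "finite ((\<lambda>p. wmul (fst p) (snd p)) ` (supp f \<times> supp g))" by (simp add: FS_def)
  thus ?thesis unfolding FS_def using supp_smult[of f g] by (simp add: finite_subset)
qed

lemma swap3: "(\<Sum>t\<in>T. \<Sum>a\<in>A. \<Sum>b\<in>B. G t a b) = (\<Sum>a\<in>A. \<Sum>b\<in>B. \<Sum>t\<in>T. G t a b)"
proof -
  have "(\<Sum>t\<in>T. \<Sum>a\<in>A. \<Sum>b\<in>B. G t a b) = (\<Sum>a\<in>A. \<Sum>t\<in>T. \<Sum>b\<in>B. G t a b)" by (rule sum.swap)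
  also have "\<dots> = (\<Sum>a\<in>A. \<Sum>b\<in>B. \<Sum>t\<in>T. G t a b)" by (rule sum.cong[OF refl], rule sum.swap)
  finally show ?thesis .
qed

lemma img_wmul: "a \<in> A \<Longrightarrow> b \<in> B \<Longrightarrow> wmul a b \<in> (\<lambda>p. wmul (fst p) (snd p)) ` (A \<times> B)"
  by (rule image_eqI[of _ _ "(a,b)"]) auto

lemma ifz_mult: "(if Q then x else 0) * (y::'a::mult_zero) = (if Q then x*y else 0)" by simp
lemma mult_ifz: "(y::'a::mult_zero) * (if Q then x else 0) = (if Q then y*x else 0)" by simp

lemma if_sum2_right: "(if P then (\<Sum>a\<in>A. \<Sum>b\<in>B. if Q a b then F a b else 0) * (H::'k::comm_ring_1) else 0)
   = (\<Sum>a\<in>A. \<Sum>b\<in>B. if Q a b then (if P then F a b * H else 0) else 0)"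
  by (cases P) (simp_all add: sum_distrib_right ifz_mult cong: if_cong)
lemma if_sum2_left: "(if P then (H::'k::comm_ring_1) * (\<Sum>a\<in>A. \<Sum>b\<in>B. if Q a b then F a b else 0) else 0)
   = (\<Sum>a\<in>A. \<Sum>b\<in>B. if Q a b then (if P then H * F a b else 0) else 0)"
  by (cases P) (simp_all add: sum_distrib_left mult_ifz cong: if_cong)

lemma inner_delta:
  assumes "finite A" "finite B" "finite T" "\<And>a b. a \<in> A \<Longrightarrow> b \<in> B \<Longrightarrow> wmul a b \<in> T"
  shows "(\<Sum>t\<in>T. if wmul t c = w then (\<Sum>a\<in>A. \<Sum>b\<in>B. if wmul a b = t then F a b else 0) * (H::'k::comm_ring_1) else 0)
     = (\<Sum>a\<in>A. \<Sum>b\<in>B. if wmul (wmul a b) c = w then F a b * H else 0)"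
proof -
  have "(\<Sum>t\<in>T. if wmul t c = w then (\<Sum>a\<in>A. \<Sum>b\<in>B. if wmul a b = t then F a b else 0) * (H::'k::comm_ring_1) else 0)
     = (\<Sum>t\<in>T. \<Sum>a\<in>A. \<Sum>b\<in>B. if wmul a b = t then (if wmul t c = w then F a b * H else 0) else 0)"
    by (rule sum.cong[OF refl], rule if_sum2_right)
  also have "\<dots> = (\<Sum>a\<in>A. \<Sum>b\<in>B. \<Sum>t\<in>T. if wmul a b = t then (if wmul t c = w then F a b * H else 0) else 0)"
    by (rule swap3)
  also have "\<dots> = (\<Sum>a\<in>A. \<Sum>b\<in>B. if wmul (wmul a b) c = w then F a b * H else 0)"
    using assms by (auto intro!: sum.cong)
  finally show ?thesis .
qed

lemma inner_delta2:
  assumes "finite A" "finite B" "finite T" "\<And>a b. a \<in> A \<Longrightarrow> b \<in> B \<Longrightarrow> wmul a b \<in> T"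
  shows "(\<Sum>t\<in>T. if wmul c t = w then (H::'k::comm_ring_1) * (\<Sum>a\<in>A. \<Sum>b\<in>B. if wmul a b = t then F a b else 0) else 0)
     = (\<Sum>a\<in>A. \<Sum>b\<in>B. if wmul c (wmul a b) = w then H * F a b else 0)"
proof -
  have "(\<Sum>t\<in>T. if wmul c t = w then (H::'k::comm_ring_1) * (\<Sum>a\<in>A. \<Sum>b\<in>B. if wmul a b = t then F a b else 0) else 0)
     = (\<Sum>t\<in>T. \<Sum>a\<in>A. \<Sum>b\<in>B. if wmul a b = t then (if wmul c t = w then H * F a b else 0) else 0)"
    by (rule sum.cong[OF refl], rule if_sum2_left)
  also have "\<dots> = (\<Sum>a\<in>A. \<Sum>b\<in>B. \<Sum>t\<in>T. if wmul a b = t then (if wmul c t = w then H * F a b else 0) else 0)"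
    by (rule swap3)
  also have "\<dots> = (\<Sum>a\<in>A. \<Sum>b\<in>B. if wmul c (wmul a b) = w then H * F a b else 0)"
    using assms by (auto intro!: sum.cong)
  finally show ?thesis .
qed

lemma smult_assoc:
  assumes "f \<in> FS" "g \<in> FS" "h \<in> FS"
  shows "smult (smult f g) h = smult f (smult g h)"
proof
  fix w
  let ?A = "supp f" and ?B = "supp g" and ?C = "supp h"
  let ?T = "(\<lambda>p. wmul (fst p) (snd p)) ` (?A \<times> ?B)"
  let ?S = "(\<lambda>p. wmul (fst p) (snd p)) ` (?B \<times> ?C)"
  have fin: "finite ?A" "finite ?B" "finite ?C" using assms by (auto simp: FS_def)
  have fT: "finite ?T" "finite ?S" using fin by auto
  have "smult (smult f g) h w = (\<Sum>t\<in>?T. \<Sum>c\<in>?C. if wmul t c = w then smult f g t * h c else 0)"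
    by (rule smult_expand) (use fin fT supp_smult in auto)
  also have "\<dots> = (\<Sum>c\<in>?C. \<Sum>t\<in>?T. if wmul t c = w then (\<Sum>a\<in>?A. \<Sum>b\<in>?B. if wmul a b = t then f a * g b else 0) * h c else 0)"
    by (subst sum.swap) (simp only: smult_expand[OF fin(1,2) order.refl order.refl])
  also have "\<dots> = (\<Sum>c\<in>?C. \<Sum>a\<in>?A. \<Sum>b\<in>?B. if wmul (wmul a b) c = w then f a * g b * h c else 0)"
    by (rule sum.cong[OF refl], rule inner_delta) (use fin img_wmul in auto)
  also have "\<dots> = (\<Sum>a\<in>?A. \<Sum>b\<in>?B. \<Sum>c\<in>?C. if wmul a (wmul b c) = w then f a * (g b * h c) else 0)"
    by (subst swap3) (simp add: wmul_assoc mult.assoc cong: if_cong)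
  also have "\<dots> = (\<Sum>a\<in>?A. \<Sum>s\<in>?S. if wmul a s = w then f a * (\<Sum>b\<in>?B. \<Sum>c\<in>?C. if wmul b c = s then g b * h c else 0) else 0)"
    by (rule sum.cong[OF refl], rule inner_delta2[symmetric]) (use fin img_wmul in auto)
  also have "\<dots> = (\<Sum>a\<in>?A. \<Sum>s\<in>?S. if wmul a s = w then f a * smult g h s else 0)"
    by (simp only: smult_expand[OF fin(2,3) order.refl order.refl])
  also have "\<dots> = smult f (smult g h) w"
    by (rule smult_expand[symmetric]) (use fin fT supp_smult in auto)
  finally show "smult (smult f g) h w = smult f (smult g h) w" .
qed
lemma supp_szero[simp]: "supp szero = {}" by (simp add: supp_def szero_def)
lemma supp_sadd: "supp (sadd f g) \<subseteq> supp f \<union> supp g" by (auto simp: supp_def sadd_def)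
lemma supp_ssub: "supp (ssub f g) \<subseteq> supp f \<union> supp g" by (auto simp: supp_def ssub_def)
lemma supp_sscale: "supp (sscale c f) \<subseteq> supp f" by (auto simp: supp_def sscale_def)
lemma supp_dl[simp]: "supp (dl u) = {u}" by (auto simp: supp_def dl_def)
lemma sone_dl: "sone = dl (zz, zz)" by (simp add: sone_def dl_def)

lemma FS_szero[simp]: "szero \<in> FS" by (simp add: FS_def)
lemma FS_dl[simp]: "dl u \<in> FS" by (simp add: FS_def)
lemma FS_sone[simp]: "sone \<in> FS" by (simp add: sone_dl)
lemma FS_sadd[simp]: "f \<in> FS \<Longrightarrow> g \<in> FS \<Longrightarrow> sadd f g \<in> FS"
  unfolding FS_def using supp_sadd by (metis finite_Un finite_subset mem_Collect_eq)
lemma FS_ssub[simp]: "f \<in> FS \<Longrightarrow> g \<in> FS \<Longrightarrow> ssub f g \<in> FS"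
  unfolding FS_def using supp_ssub by (metis finite_Un finite_subset mem_Collect_eq)
lemma FS_sscale[simp]: "f \<in> FS \<Longrightarrow> sscale c f \<in> FS"
  unfolding FS_def using supp_sscale by (metis finite_subset mem_Collect_eq)

lemma if_add0: "(if c then (a::'a::comm_monoid_add) + b else 0) = (if c then a else 0) + (if c then b else 0)" by simp
lemma if_sub0: "(if c then (a::'a::ab_group_add) - b else 0) = (if c then a else 0) - (if c then b else 0)" by simp

lemma smult_sadd_left:
  assumes "f \<in> FS" "g \<in> FS" "h \<in> FS"
  shows "smult (sadd f g) h = sadd (smult f h) (smult g h)"
proof
  fix w
  let ?A = "supp f \<union> supp g"
  have fin: "finite ?A" "finite (supp h)" using assms by (auto simp: FS_def)
  have "smult (sadd f g) h w = (\<Sum>u\<in>?A. \<Sum>v\<in>supp h. if wmul u v = w then sadd f g u * h v else 0)"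
    by (rule smult_expand) (use fin supp_sadd in auto)
  also have "\<dots> = (\<Sum>u\<in>?A. \<Sum>v\<in>supp h. if wmul u v = w then f u * h v else 0)
     + (\<Sum>u\<in>?A. \<Sum>v\<in>supp h. if wmul u v = w then g u * h v else 0)"
    by (simp add: sadd_def distrib_right if_add0 sum.distrib cong: if_cong)
  also have "\<dots> = sadd (smult f h) (smult g h) w"
    by (simp add: sadd_def smult_expand[OF fin, of f h] smult_expand[OF fin, of g h])
  finally show "smult (sadd f g) h w = sadd (smult f h) (smult g h) w" .
qed

lemma smult_sadd_right:
  assumes "f \<in> FS" "g \<in> FS" "h \<in> FS"
  shows "smult h (sadd f g) = sadd (smult h f) (smult h g)"
proof
  fix w
  let ?A = "supp f \<union> supp g"
  have fin: "finite (supp h)" "finite ?A" using assms by (auto simp: FS_def)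
  have "smult h (sadd f g) w = (\<Sum>u\<in>supp h. \<Sum>v\<in>?A. if wmul u v = w then h u * sadd f g v else 0)"
    by (rule smult_expand) (use fin supp_sadd in auto)
  also have "\<dots> = (\<Sum>u\<in>supp h. \<Sum>v\<in>?A. if wmul u v = w then h u * f v else 0)
     + (\<Sum>u\<in>supp h. \<Sum>v\<in>?A. if wmul u v = w then h u * g v else 0)"
    by (simp add: sadd_def distrib_left if_add0 sum.distrib cong: if_cong)
  also have "\<dots> = sadd (smult h f) (smult h g) w"
    by (simp add: sadd_def smult_expand[OF fin, of h f] smult_expand[OF fin, of h g])
  finally show "smult h (sadd f g) w = sadd (smult h f) (smult h g) w" .
qed

lemma smult_ssub_left:
  assumes "f \<in> FS" "g \<in> FS" "h \<in> FS"
  shows "smult (ssub f g) h = ssub (smult f h) (smult g h)"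
proof
  fix w
  let ?A = "supp f \<union> supp g"
  have fin: "finite ?A" "finite (supp h)" using assms by (auto simp: FS_def)
  have "smult (ssub f g) h w = (\<Sum>u\<in>?A. \<Sum>v\<in>supp h. if wmul u v = w then ssub f g u * h v else 0)"
    by (rule smult_expand) (use fin supp_ssub in auto)
  also have "\<dots> = (\<Sum>u\<in>?A. \<Sum>v\<in>supp h. if wmul u v = w then f u * h v else 0)
     - (\<Sum>u\<in>?A. \<Sum>v\<in>supp h. if wmul u v = w then g u * h v else 0)"
    by (simp add: ssub_def left_diff_distrib if_sub0 sum_subtractf cong: if_cong)
  also have "\<dots> = ssub (smult f h) (smult g h) w"
    by (simp add: ssub_def smult_expand[OF fin, of f h] smult_expand[OF fin, of g h])
  finally show "smult (ssub f g) h w = ssub (smult f h) (smult g h) w" .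
qed

lemma smult_ssub_right:
  assumes "f \<in> FS" "g \<in> FS" "h \<in> FS"
  shows "smult h (ssub f g) = ssub (smult h f) (smult h g)"
proof
  fix w
  let ?A = "supp f \<union> supp g"
  have fin: "finite (supp h)" "finite ?A" using assms by (auto simp: FS_def)
  have "smult h (ssub f g) w = (\<Sum>u\<in>supp h. \<Sum>v\<in>?A. if wmul u v = w then h u * ssub f g v else 0)"
    by (rule smult_expand) (use fin supp_ssub in auto)
  also have "\<dots> = (\<Sum>u\<in>supp h. \<Sum>v\<in>?A. if wmul u v = w then h u * f v else 0)
     - (\<Sum>u\<in>supp h. \<Sum>v\<in>?A. if wmul u v = w then h u * g v else 0)"
    by (simp add: ssub_def right_diff_distrib if_sub0 sum_subtractf cong: if_cong)
  also have "\<dots> = ssub (smult h f) (smult h g) w"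
    by (simp add: ssub_def smult_expand[OF fin, of h f] smult_expand[OF fin, of h g])
  finally show "smult h (ssub f g) w = ssub (smult h f) (smult h g) w" .
qed

lemma smult_sscale_left:
  assumes "f \<in> FS" "h \<in> FS"
  shows "smult (sscale c f) h = sscale c (smult f h)"
proof
  fix w
  have fin: "finite (supp f)" "finite (supp h)" using assms by (auto simp: FS_def)
  have "smult (sscale c f) h w = (\<Sum>u\<in>supp f. \<Sum>v\<in>supp h. if wmul u v = w then sscale c f u * h v else 0)"
    by (rule smult_expand) (use fin supp_sscale in auto)
  also have "\<dots> = c * (\<Sum>u\<in>supp f. \<Sum>v\<in>supp h. if wmul u v = w then f u * h v else 0)"
    by (simp add: sscale_def sum_distrib_left mult_ifz mult.assoc cong: if_cong)
  also have "\<dots> = sscale c (smult f h) w"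
    by (simp add: sscale_def smult_expand[OF fin, of f h])
  finally show "smult (sscale c f) h w = sscale c (smult f h) w" .
qed

lemma smult_sscale_right:
  assumes "f \<in> FS" "h \<in> FS"
  shows "smult h (sscale c f) = sscale c (smult h f)"
proof
  fix w
  have fin: "finite (supp h)" "finite (supp f)" using assms by (auto simp: FS_def)
  have "smult h (sscale c f) w = (\<Sum>u\<in>supp h. \<Sum>v\<in>supp f. if wmul u v = w then h u * sscale c f v else 0)"
    by (rule smult_expand) (use fin supp_sscale in auto)
  also have "\<dots> = c * (\<Sum>u\<in>supp h. \<Sum>v\<in>supp f. if wmul u v = w then h u * f v else 0)"
    by (simp add: sscale_def sum_distrib_left mult_ifz ac_simps cong: if_cong)
  also have "\<dots> = sscale c (smult h f) w"
    by (simp add: sscale_def smult_expand[OF fin, of h f])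
  finally show "smult h (sscale c f) w = sscale c (smult h f) w" .
qed

lemma smult_szero_left[simp]: "smult szero h = szero"
  unfolding smult_def by (simp add: szero_def[symmetric])
lemma smult_szero_right[simp]: "smult h szero = szero"
  unfolding smult_def by (simp add: szero_def[symmetric])

lemma smult_dl: "smult (dl u) (dl v) = dl (wmul u v)"
proof
  fix w
  show "smult (dl u) (dl v) w = dl (wmul u v) w"
    by (subst smult_expand[of "{u}" "{v}"]) (auto simp: dl_def supp_def)
qed

lemma wmul_zz_left[simp]: "wmul (zz, zz) v = v" by (simp add: wmul_def)
lemma wmul_zz_right[simp]: "wmul v (zz, zz) = v" by (simp add: wmul_def)

lemma smult_sone_left[simp]:
  assumes "f \<in> FS" shows "smult sone f = f"
proof
  fix w
  have fin: "finite (supp f)" using assms by (auto simp: FS_def)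
  have "smult sone f w = (\<Sum>u\<in>{(zz,zz)}. \<Sum>v\<in>supp f. if wmul u v = w then sone u * f v else 0)"
    by (rule smult_expand) (use fin in \<open>auto simp: sone_dl\<close>)
  also have "\<dots> = f w" using fin by (simp add: sone_def supp_def)
  finally show "smult sone f w = f w" .
qed

lemma smult_sone_right[simp]:
  assumes "f \<in> FS" shows "smult f sone = f"
proof
  fix w
  have fin: "finite (supp f)" using assms by (auto simp: FS_def)
  have "smult f sone w = (\<Sum>v\<in>supp f. \<Sum>u\<in>{(zz,zz)}. if wmul v u = w then f v * sone u else 0)"
    by (rule smult_expand) (use fin in \<open>auto simp: sone_dl\<close>)
  also have "\<dots> = f w" using fin by (simp add: sone_def supp_def)
  finally show "smult f sone w = f w" .
qed

lemma smult_comm: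
  assumes "f \<in> FS" "g \<in> FS" "\<And>u v. u \<in> supp f \<Longrightarrow> v \<in> supp g \<Longrightarrow> wmul u v = wmul v u"
  shows "smult f g = smult g f"
proof
  fix w
  have fin: "finite (supp f)" "finite (supp g)" using assms by (auto simp: FS_def)
  have "smult f g w = (\<Sum>u\<in>supp f. \<Sum>v\<in>supp g. if wmul u v = w then f u * g v else 0)"
    by (rule smult_expand) (use fin in auto)
  also have "\<dots> = (\<Sum>v\<in>supp g. \<Sum>u\<in>supp f. if wmul v u = w then g v * f u else 0)"
    by (subst sum.swap) (auto intro!: sum.cong simp: assms(3) mult.commute)
  also have "\<dots> = smult g f w"
    by (rule smult_expand[symmetric]) (use fin in auto)
  finally show "smult f g w = smult g f w" .
qed



lemma Sn_FS: "f \<in> Sn n \<Longrightarrow> f \<in> FS" by (simp add: Sn_def FS_def)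

lemma wmul_words: "u \<in> words n \<Longrightarrow> v \<in> words n \<Longrightarrow> wmul u v \<in> words n"
  by (auto simp: words_def wmul_def split: prod.splits)

lemma Sn_smult[simp]: "f \<in> Sn n \<Longrightarrow> g \<in> Sn n \<Longrightarrow> smult f g \<in> Sn n"
proof -
  assume a: "f \<in> Sn n" "g \<in> Sn n"
  hence "smult f g \<in> FS" by (simp add: Sn_FS)
  moreover have "supp (smult f g) \<subseteq> words n"
  proof
    fix w assume "w \<in> supp (smult f g)"
    then obtain p where "p \<in> supp f \<times> supp g" "w = wmul (fst p) (snd p)" using supp_smult[of f g] by blast
    moreover have "fst p \<in> words n" "snd p \<in> words n" using a \<open>p \<in> supp f \<times> supp g\<close> by (auto simp: Sn_def)
    ultimately show "w \<in> words n" using wmul_words by blast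
  qed
  ultimately show ?thesis by (simp add: Sn_def FS_def)
qed

lemma Sn_szero[simp]: "szero \<in> Sn n" by (simp add: Sn_def)
lemma Sn_dl[simp]: "u \<in> words n \<Longrightarrow> dl u \<in> Sn n" by (simp add: Sn_def)
lemma zz_words[simp]: "(zz, zz) \<in> words n" by (simp add: words_def)
lemma Sn_sone[simp]: "sone \<in> Sn n" by (simp add: sone_dl)
lemma Sn_sadd[simp]: "f \<in> Sn n \<Longrightarrow> g \<in> Sn n \<Longrightarrow> sadd f g \<in> Sn n"
  using supp_sadd[of f g] FS_sadd[of f g] by (auto simp: Sn_def FS_def)
lemma Sn_ssub[simp]: "f \<in> Sn n \<Longrightarrow> g \<in> Sn n \<Longrightarrow> ssub f g \<in> Sn n"
  using supp_ssub[of f g] FS_ssub[of f g] by (auto simp: Sn_def FS_def)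
lemma Sn_sscale[simp]: "f \<in> Sn n \<Longrightarrow> sscale c f \<in> Sn n"
  using supp_sscale[of c f] FS_sscale[of f c] by (auto simp: Sn_def FS_def)

definition vars :: "word \<Rightarrow> nat set" where
  "vars w = {i. fst w i \<noteq> 0 \<or> snd w i \<noteq> 0}"

definition VS :: "(word \<Rightarrow> 'k::field) \<Rightarrow> nat set" where
  "VS f = \<Union> (vars ` supp f)"

lemma wmul_comm_disj:
  assumes "vars u \<inter> vars v = {}" shows "wmul u v = wmul v u"
proof -
  have h: "(fst u x = 0 \<and> snd u x = 0) \<or> (fst v x = 0 \<and> snd v x = 0)" for x
    using assms by (auto simp: vars_def)
  have "fst (wmul u v) x = fst (wmul v u) x" for x using h[of x] by (auto simp: wmul_def)
  moreover have "snd (wmul u v) x = snd (wmul v u) x" for x using h[of x] by (auto simp: wmul_def)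
  ultimately show ?thesis by (simp add: prod_eq_iff fun_eq_iff)
qed

lemma vars_wmul: "vars (wmul u v) \<subseteq> vars u \<union> vars v"
  by (auto simp: vars_def wmul_def)

lemma VS_smult: "VS (smult f g) \<subseteq> VS f \<union> VS g"
proof
  fix i assume "i \<in> VS (smult f g)"
  then obtain w where w: "w \<in> supp (smult f g)" "i \<in> vars w" by (auto simp: VS_def)
  then obtain p where "p \<in> supp f \<times> supp g" "w = wmul (fst p) (snd p)" using supp_smult[of f g] by blast
  hence "i \<in> vars (fst p) \<or> i \<in> vars (snd p)" "fst p \<in> supp f" "snd p \<in> supp g" using w vars_wmul[of "fst p" "snd p"] by auto
  thus "i \<in> VS f \<union> VS g" unfolding VS_def by blast
qed

lemma VS_sadd: "VS (sadd f g) \<subseteq> VS f \<union> VS g"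
  using supp_sadd[of f g] unfolding VS_def by fastforce
lemma VS_ssub: "VS (ssub f g) \<subseteq> VS f \<union> VS g"
  using supp_ssub[of f g] unfolding VS_def by fastforce
lemma VS_sscale: "VS (sscale c f) \<subseteq> VS f"
  using supp_sscale[of c f] unfolding VS_def by fastforce
lemma VS_dl: "VS (dl u) = vars u" by (simp add: VS_def)
lemma VS_sone[simp]: "VS sone = {}" by (simp add: sone_dl VS_dl vars_def)

lemma smult_comm_VS:
  assumes "f \<in> FS" "g \<in> FS" "VS f \<inter> VS g = {}"
  shows "smult f g = smult g f"
  by (rule smult_comm) (use assms in \<open>auto intro!: wmul_comm_disj simp: VS_def\<close>)

lemma sspan_sub:
  assumes "x \<in> sspan A" "A \<subseteq> B" "szero \<in> B" "\<And>a b. a \<in> B \<Longrightarrow> b \<in> B \<Longrightarrow> sadd a b \<in> B"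
    "\<And>c a. a \<in> B \<Longrightarrow> sscale c a \<in> B"
  shows "x \<in> B"
  using assms(1) by induction (use assms in auto)

lemma sspan_FS: "A \<subseteq> FS \<Longrightarrow> sspan A \<subseteq> FS"
  by (auto elim: sspan_sub)

lemma sspan_mono: "A \<subseteq> B \<Longrightarrow> sspan A \<subseteq> sspan B"
  by (auto elim!: sspan_sub intro: sspan.intros)

lemma sspan_idem: "A \<subseteq> sspan B \<Longrightarrow> sspan A \<subseteq> sspan B"
  by (auto elim!: sspan_sub intro: sspan.intros)

lemma sspan_dl: "finite S \<Longrightarrow> supp f \<subseteq> S \<Longrightarrow> f \<in> sspan (dl ` S)"
proof (induction S arbitrary: f rule: finite_induct)
  case empty
  hence "f = szero" by (auto simp: supp_def szero_def fun_eq_iff)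
  thus ?case by (simp add: sspan.zero)
next
  case (insert u S)
  have "supp (f(u := 0)) \<subseteq> S" using insert by (auto simp: supp_def)
  hence "f(u := 0) \<in> sspan (dl ` S)" using insert by blast
  hence 1: "f(u := 0) \<in> sspan (dl ` insert u S)" using sspan_mono[of "dl ` S" "dl ` insert u S"] by blast
  have 2: "sscale (f u) (dl u) \<in> sspan (dl ` insert u S)" by (auto intro: sspan.intros)
  have "f = sadd (sscale (f u) (dl u)) (f(u := 0))"
    by (auto simp: fun_eq_iff sadd_def sscale_def dl_def)
  thus ?case using 1 2 sspan.add by metis
qed

lemma FS_sspan_dl: "f \<in> FS \<Longrightarrow> f \<in> sspan (dl ` supp f)"
  by (rule sspan_dl) (auto simp: FS_def)

lemma sspan_linear:
  assumes "x \<in> sspan A" "A \<subseteq> FS" "L szero = szero"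
    "\<And>a b. a \<in> FS \<Longrightarrow> b \<in> FS \<Longrightarrow> L (sadd a b) = sadd (L a) (L b)"
    "\<And>c a. a \<in> FS \<Longrightarrow> L (sscale c a) = sscale c (L a)"
  shows "L x \<in> sspan (L ` A)"
proof -
  have "L x \<in> sspan (L ` A) \<and> x \<in> FS"
    using assms(1)
  proof induction
    case zero thus ?case by (simp add: assms(3) sspan.zero)
  next
    case (base a) thus ?case using assms(2) by (auto intro: sspan.base)
  next
    case (add a b) thus ?case by (simp add: assms(4) sspan.add)
  next
    case (scale a c) thus ?case by (simp add: assms(5) sspan.scale)
  qed
  thus ?thesis by simp
qed

lemma sspan_bilin:
  assumes "a \<in> sspan A" "b \<in> sspan B" "A \<subseteq> FS" "B \<subseteq> FS"
  shows "smult a b \<in> sspan {smult u v | u v. u \<in> A \<and> v \<in> B}"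
proof -
  let ?C = "{smult u v | u v. u \<in> A \<and> v \<in> B}"
  have bFS: "b \<in> FS" using assms sspan_FS by blast
  have "smult a b \<in> sspan ((\<lambda>x. smult x b) ` A)"
    by (rule sspan_linear[OF assms(1,3)]) (simp_all add: smult_sadd_left smult_sscale_left bFS)
  moreover have "(\<lambda>x. smult x b) ` A \<subseteq> sspan ?C"
  proof
    fix y assume "y \<in> (\<lambda>x. smult x b) ` A"
    then obtain u where u: "u \<in> A" "y = smult u b" by blast
    have uFS: "u \<in> FS" using u assms by blast
    have "smult u b \<in> sspan (smult u ` B)"
      by (rule sspan_linear[OF assms(2,4)]) (simp_all add: smult_sadd_right smult_sscale_right uFS)
    moreover have "smult u ` B \<subseteq> ?C" using u by blast
    ultimately show "y \<in> sspan ?C" using u sspan_mono by blast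
  qed
  ultimately show ?thesis using sspan_idem by blast
qed



definition ke :: "nat \<Rightarrow> nat \<Rightarrow> nat \<Rightarrow> nat" where
  "ke i k = (\<lambda>j. if j = i then k else 0)"

definition ei :: "nat \<Rightarrow> nat \<Rightarrow> nat" where
  "ei i = (\<lambda>j. if j = i then 1 else 0)"

definition xp :: "(nat \<Rightarrow> nat) \<Rightarrow> word \<Rightarrow> 'k::field" where "xp m = dl (m, zz)"
definition yp :: "(nat \<Rightarrow> nat) \<Rightarrow> word \<Rightarrow> 'k::field" where "yp m = dl (zz, m)"
definition Pm :: "nat \<Rightarrow> word \<Rightarrow> 'k::field" where "Pm i = ssub sone (dl (ei i, ei i))"
definition PP :: "nat list \<Rightarrow> word \<Rightarrow> 'k::field" where "PP xs = foldr smult (map Pm xs) sone"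
definition EE :: "nat \<Rightarrow> word \<Rightarrow> 'k::field" where "EE n = PP [0..<n]"
definition idx :: "nat \<Rightarrow> (nat \<Rightarrow> nat) set" where "idx n = {k. \<forall>i\<ge>n. k i = 0}"
definition Ek :: "nat \<Rightarrow> (nat \<Rightarrow> nat) \<Rightarrow> (nat \<Rightarrow> nat) \<Rightarrow> word \<Rightarrow> 'k::field" where
  "Ek n k l = smult (xp k) (smult (EE n) (yp l))"

lemma FS_xp[simp]: "xp m \<in> FS" by (simp add: xp_def)
lemma FS_yp[simp]: "yp m \<in> FS" by (simp add: yp_def)
lemma FS_Pm[simp]: "Pm i \<in> FS" by (simp add: Pm_def)
lemma PP_Nil[simp]: "PP [] = sone" by (simp add: PP_def)
lemma PP_Cons[simp]: "PP (a # xs) = smult (Pm a) (PP xs)" by (simp add: PP_def)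
lemma FS_PP[simp]: "PP xs \<in> FS" by (induction xs) simp_all
lemma FS_EE[simp]: "EE n \<in> FS" by (simp add: EE_def)
lemma FS_Ek[simp]: "Ek n k l \<in> FS" by (simp add: Ek_def)

lemma Sn_xp[simp]: "m \<in> idx n \<Longrightarrow> xp m \<in> Sn n" by (simp add: xp_def words_def idx_def)
lemma Sn_yp[simp]: "m \<in> idx n \<Longrightarrow> yp m \<in> Sn n" by (simp add: yp_def words_def idx_def)
lemma Sn_Pm[simp]: "i < n \<Longrightarrow> Pm i \<in> Sn n" by (simp add: Pm_def words_def ke_def ei_def)
lemma Sn_PP: "set xs \<subseteq> {..<n} \<Longrightarrow> PP xs \<in> Sn n" by (induction xs) simp_all
lemma Sn_EE[simp]: "EE n \<in> Sn n" unfolding EE_def by (rule Sn_PP) auto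
lemma Sn_Ek[simp]: "k \<in> idx n \<Longrightarrow> l \<in> idx n \<Longrightarrow> Ek n k l \<in> Sn n" by (simp add: Ek_def)
lemma zz_idx[simp]: "zz \<in> idx n" by (simp add: idx_def)

lemma VS_Pm: "VS (Pm i) \<subseteq> {i}"
  using VS_ssub[of sone "dl (ei i, ei i)"] by (auto simp: Pm_def VS_dl vars_def ke_def ei_def split: if_splits)
lemma VS_PP: "VS (PP xs) \<subseteq> set xs"
proof (induction xs)
  case Nil thus ?case by simp
next
  case (Cons a xs) thus ?case using VS_smult[of "Pm a" "PP xs"] VS_Pm[of a] by auto
qed

lemma smult_assoc'[simp]: "f \<in> FS \<Longrightarrow> g \<in> FS \<Longrightarrow> h \<in> FS \<Longrightarrow> smult (smult f g) h = smult f (smult g h)"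
  by (rule smult_assoc)

lemma smult_dl2: "h \<in> FS \<Longrightarrow> smult (dl u) (smult (dl v) h) = smult (dl (wmul u v)) h"
  by (simp add: smult_dl[symmetric])

lemma ssub_self[simp]: "ssub f f = szero" by (simp add: ssub_def szero_def)

lemma Pm_comm: "j \<notin> set ys \<Longrightarrow> smult (Pm j) (PP ys) = smult (PP ys) (Pm j)"
  by (rule smult_comm_VS) (use VS_Pm[of j] VS_PP[of ys] in auto)

lemma PP_remove: "distinct xs \<Longrightarrow> j \<in> set xs \<Longrightarrow> (PP xs :: word \<Rightarrow> 'k::field) = smult (Pm j) (PP (remove1 j xs))"
proof (induction xs)
  case Nil thus ?case by simp
next
  case (Cons a xs)
  show ?case
  proof (cases "a = j")
    case True thus ?thesis using Cons by simp
  next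
    case False
    hence IH: "(PP xs :: word \<Rightarrow> 'k) = smult (Pm j) (PP (remove1 j xs))" using Cons by auto
    have "(PP (a # xs) :: word \<Rightarrow> 'k) = smult (Pm a) (smult (Pm j) (PP (remove1 j xs)))" by (simp add: IH)
    also have "\<dots> = smult (smult (Pm a) (Pm j)) (PP (remove1 j xs))" by simp
    also have "smult (Pm a) (Pm j) = (smult (Pm j) (Pm a) :: word \<Rightarrow> 'k)"
      by (rule smult_comm_VS) (use VS_Pm[of a] VS_Pm[of j] False in auto)
    also have "smult (smult (Pm j) (Pm a)) (PP (remove1 j xs)) = smult (Pm j) (PP (remove1 j (a # xs)))"
      using False by simp
    finally show ?thesis .
  qed
qed

lemma wmul_ee: "wmul (ei i, ei i) (ei i, ei i) = (ei i, ei i)"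
  by (auto simp: wmul_def ke_def ei_def fun_eq_iff)

lemma Pm_idem: "smult (Pm i) (Pm i) = (Pm i :: word \<Rightarrow> 'k::field)"
  by (simp add: Pm_def smult_ssub_left smult_ssub_right smult_dl wmul_ee) (simp add: ssub_def szero_def fun_eq_iff)

lemma PP_idem: "distinct xs \<Longrightarrow> smult (PP xs) (PP xs) = (PP xs :: word \<Rightarrow> 'k::field)"
proof (induction xs)
  case Nil thus ?case by simp
next
  case (Cons a xs)
  hence IH: "smult (PP xs) (PP xs) = (PP xs :: word \<Rightarrow> 'k)" and na: "a \<notin> set xs" by auto
  have "smult (PP (a#xs)) (PP (a#xs)) = (smult (Pm a) :: _ \<Rightarrow> word \<Rightarrow> 'k) (smult (smult (PP xs) (Pm a)) (PP xs))"
    by simp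
  also have "\<dots> = smult (Pm a) (smult (smult (Pm a) (PP xs)) (PP xs))" by (simp add: Pm_comm[OF na])
  also have "\<dots> = smult (smult (Pm a) (Pm a)) (smult (PP xs) (PP xs))" by simp
  also have "\<dots> = PP (a#xs)" by (simp only: Pm_idem IH PP_Cons)
  finally show ?case .
qed

lemma EE_idem: "smult (EE n) (EE n) = EE n" by (simp add: EE_def PP_idem)

lemma wmul_ex: "wmul (ei i, ei i) (ei i, zz) = (ei i, zz)"
  by (auto simp: wmul_def ke_def ei_def fun_eq_iff)
lemma wmul_ye: "wmul (zz, ei i) (ei i, ei i) = (zz, ei i)"
  by (auto simp: wmul_def ke_def ei_def fun_eq_iff)

lemma Pm_x: "smult (Pm i) (xp (ei i)) = szero"
  by (simp add: Pm_def xp_def smult_ssub_left smult_dl wmul_ex)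
lemma y_Pm: "smult (yp (ei i)) (Pm i) = szero"
  by (simp add: Pm_def yp_def smult_ssub_right smult_dl wmul_ye)

lemma Pm_x2: "h \<in> FS \<Longrightarrow> smult (Pm i) (smult (xp (ei i)) h) = szero"
  by (subst smult_assoc[symmetric]) (simp_all add: Pm_x)
lemma y_Pm2: "h \<in> FS \<Longrightarrow> smult (yp (ei i)) (smult (Pm i) h) = szero"
  by (subst smult_assoc[symmetric]) (simp_all add: y_Pm)

lemma idx_nz: "m \<in> idx n \<Longrightarrow> m \<noteq> zz \<Longrightarrow> \<exists>j<n. m j \<noteq> 0"
proof -
  assume a: "m \<in> idx n" "m \<noteq> zz"
  then obtain j where "m j \<noteq> 0" by (auto simp: fun_eq_iff)
  moreover have "j < n" using a(1) calculation by (auto simp: idx_def intro: ccontr)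
  ultimately show ?thesis by blast
qed

lemma EE_x_zero:
  assumes "m \<in> idx n" "m \<noteq> zz"
  shows "smult (EE n) (xp m) = (szero :: word \<Rightarrow> 'k::field)"
proof -
  obtain j where j: "j < n" "m j \<noteq> 0" using idx_nz[OF assms] by blast
  define m' where "m' = (\<lambda>i. if i = j then m i - 1 else m i)"
  have w: "wmul (ei j, zz) (m', zz) = (m, zz)"
    using j by (simp add: wmul_def m'_def ei_def fun_eq_iff)
  have xm: "(xp m :: word \<Rightarrow> 'k) = smult (xp (ei j)) (xp m')"
    unfolding xp_def smult_dl w ..
  have E: "(EE n :: word \<Rightarrow> 'k) = smult (PP (remove1 j [0..<n])) (Pm j)"
    unfolding EE_def using j by (subst PP_remove[of _ j]) (auto intro!: Pm_comm distinct_remove1)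
  show ?thesis by (simp add: E xm Pm_x2)
qed

lemma y_EE_zero:
  assumes "m \<in> idx n" "m \<noteq> zz"
  shows "smult (yp m) (EE n) = (szero :: word \<Rightarrow> 'k::field)"
proof -
  obtain j where j: "j < n" "m j \<noteq> 0" using idx_nz[OF assms] by blast
  define m' where "m' = (\<lambda>i. if i = j then m i - 1 else m i)"
  have w: "wmul (zz, m') (zz, ei j) = (zz, m)"
    using j by (simp add: wmul_def m'_def ei_def fun_eq_iff)
  have ym: "(yp m :: word \<Rightarrow> 'k) = smult (yp m') (yp (ei j))"
    unfolding yp_def smult_dl w ..
  have E: "(EE n :: word \<Rightarrow> 'k) = smult (Pm j) (PP (remove1 j [0..<n]))"
    unfolding EE_def using j by (subst PP_remove[of _ j]) auto
  show ?thesis by (simp add: E ym y_Pm2)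
qed




lemma smult_Pm_zz: "R \<in> FS \<Longrightarrow> smult (Pm j) R (zz, zz) = R (zz, zz)"
proof -
  assume R: "R \<in> FS"
  have "smult (dl (ei j, ei j)) R (zz, zz) = (\<Sum>u\<in>{(ei j, ei j)}. \<Sum>v\<in>supp R. if wmul u v = (zz, zz) then dl (ei j, ei j) u * R v else 0)"
    by (rule smult_expand) (use R in \<open>auto simp: FS_def\<close>)
  also have "\<dots> = 0"
  proof -
    have "wmul (ei j, ei j) v \<noteq> (zz, zz)" for v
    proof
      assume "wmul (ei j, ei j) v = (zz, zz)"
      hence "fst (wmul (ei j, ei j) v) j = 0" by simp
      thus False by (simp add: wmul_def ei_def)
    qed
    thus ?thesis by simp
  qed
  moreover have "smult (Pm j) R = ssub R (smult (dl (ei j, ei j)) R)" using R by (simp add: Pm_def smult_ssub_left)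
  ultimately show ?thesis by (simp add: ssub_def)
qed

lemma PP_zz: "PP xs (zz, zz) = 1"
  by (induction xs) (simp_all add: smult_Pm_zz sone_def)

lemma EE_nz: "(EE n :: word \<Rightarrow> 'k::field) \<noteq> szero"
proof
  assume "(EE n :: word \<Rightarrow> 'k) = szero"
  hence "(EE n :: word \<Rightarrow> 'k) (zz, zz) = 0" by (simp add: szero_def)
  thus False by (simp add: EE_def PP_zz)
qed

lemma words_idx: "(a, b) \<in> words n \<Longrightarrow> a \<in> idx n \<and> b \<in> idx n"
  by (auto simp: words_def idx_def)

lemma wmul_split: "wmul (c, zz) (zz, d) = (c, d)" by (simp add: wmul_def)

lemma dl_split: "(dl (c, d) :: word \<Rightarrow> 'k::field) = smult (dl (c, zz)) (dl (zz, d))"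
  by (simp add: smult_dl wmul_split)

lemma EE_x_zero2: "m \<in> idx n \<Longrightarrow> m \<noteq> zz \<Longrightarrow> h \<in> FS \<Longrightarrow> smult (EE n) (smult (dl (m, zz)) h) = szero"
  by (subst smult_assoc[symmetric]) (simp_all add: EE_x_zero[unfolded xp_def])

lemma y_EE_zero2: "m \<in> idx n \<Longrightarrow> m \<noteq> zz \<Longrightarrow> h \<in> FS \<Longrightarrow> smult (dl (zz, m)) (smult (EE n) h) = szero"
  by (subst smult_assoc[symmetric]) (simp_all add: y_EE_zero[unfolded yp_def])

lemma EE_idem2: "h \<in> FS \<Longrightarrow> smult (EE n) (smult (EE n) h) = smult (EE n) h"
  by (subst smult_assoc[symmetric]) (simp_all add: EE_idem)

lemma core2:
  assumes "(c, d) \<in> words n" "h \<in> FS"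
  shows "smult (EE n) (smult (dl (c, d)) (smult (EE n) h)) = (if (c, d) = (zz, zz) then smult (EE n) h else szero)"
proof -
  have cd: "c \<in> idx n" "d \<in> idx n" using words_idx[OF assms(1)] by auto
  show ?thesis
  proof (cases "c = zz")
    case False
    thus ?thesis using cd assms by (simp only: dl_split[of c d]) (simp add: EE_x_zero2)
  next
    case True
    show ?thesis
    proof (cases "d = zz")
      case False
      thus ?thesis using cd assms True by (simp add: y_EE_zero2)
    next
      case True
      thus ?thesis using \<open>c = zz\<close> assms by (simp add: sone_dl[symmetric] EE_idem2)
    qed
  qed
qed

lemma core0:
  assumes "(c, d) \<in> words n"
  shows "smult (EE n) (smult (dl (c, d)) (EE n)) = (if (c, d) = (zz, zz) then EE n else (szero :: word \<Rightarrow> 'k::field))"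
proof (cases "(c, d) = (zz, zz)")
  case True thus ?thesis using core2[OF assms, of sone] by simp
next
  case False
  have "smult (EE n) (smult (dl (c, d)) (EE n)) = (szero :: word \<Rightarrow> 'k::field)"
    using core2[OF assms, of sone] by (simp only: smult_sone_right[OF FS_EE] if_not_P[OF False] FS_sone) simp
  thus ?thesis using False by (simp only: if_not_P[OF False] if_False)
qed

lemma wmul_dx: "wmul (a, b) (k, zz) = (\<lambda>i. a i + (k i - b i), \<lambda>i. b i - k i)" by (simp add: wmul_def)
lemma wmul_yd: "wmul (zz, l) (a, b) = (\<lambda>i. a i - l i, \<lambda>i. b i + (l i - a i))" by (simp add: wmul_def)
lemma wmul_yx: "wmul (zz, l) (k, zz) = (\<lambda>i. k i - l i, \<lambda>i. l i - k i)" by (simp add: wmul_def)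

lemma idx_diff: "k \<in> idx n \<Longrightarrow> (\<lambda>i. k i - l i) \<in> idx n" by (simp add: idx_def)
lemma idx_add: "k \<in> idx n \<Longrightarrow> l \<in> idx n \<Longrightarrow> (\<lambda>i. k i + l i) \<in> idx n" by (simp add: idx_def)
lemma idx_add_diff: "k \<in> idx n \<Longrightarrow> l \<in> idx n \<Longrightarrow> (\<lambda>i. k i + (l i - m i)) \<in> idx n" by (simp add: idx_def)

lemma zz_iff_le: "((\<lambda>i. b i - k i) = zz) = (\<forall>i. b i \<le> k i)"
  by (simp add: fun_eq_iff)

lemma D_left:
  assumes "(a, b) \<in> words n" "k \<in> idx n" "l \<in> idx n"
  shows "smult (dl (a, b)) (Ek n k l) = (if \<forall>i. b i \<le> k i then Ek n (\<lambda>i. a i + (k i - b i)) l else szero)"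
proof -
  have ab: "a \<in> idx n" "b \<in> idx n" using words_idx[OF assms(1)] by auto
  have "smult (dl (a, b)) (Ek n k l) = smult (dl (wmul (a, b) (k, zz))) (smult (EE n) (dl (zz, l)))"
    by (simp add: Ek_def xp_def yp_def smult_dl2)
  also have "\<dots> = smult (dl (\<lambda>i. a i + (k i - b i), zz)) (smult (dl (zz, \<lambda>i. b i - k i)) (smult (EE n) (dl (zz, l))))"
    unfolding wmul_dx dl_split[of "\<lambda>i. a i + (k i - b i)" "\<lambda>i. b i - k i"] by simp
  also have "\<dots> = (if \<forall>i. b i \<le> k i then Ek n (\<lambda>i. a i + (k i - b i)) l else szero)"
  proof (cases "\<forall>i. b i \<le> k i")
    case True
    hence "(\<lambda>i. b i - k i) = zz" by (simp add: fun_eq_iff)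
    thus ?thesis using True by (simp add: sone_dl[symmetric] Ek_def xp_def yp_def)
  next
    case False
    hence "(\<lambda>i. b i - k i) \<noteq> zz" by (simp add: fun_eq_iff)
    thus ?thesis using False ab by (subst if_not_P[OF False]) (simp add: y_EE_zero2 idx_diff)
  qed
  finally show ?thesis .
qed

lemma D_right:
  assumes "(a, b) \<in> words n" "k \<in> idx n" "l \<in> idx n"
  shows "smult (Ek n k l) (dl (a, b)) = (if \<forall>i. a i \<le> l i then Ek n k (\<lambda>i. b i + (l i - a i)) else szero)"
proof -
  have ab: "a \<in> idx n" "b \<in> idx n" using words_idx[OF assms(1)] by auto
  have "smult (Ek n k l) (dl (a, b)) = smult (dl (k, zz)) (smult (EE n) (dl (wmul (zz, l) (a, b))))"
    by (simp add: Ek_def xp_def yp_def smult_dl)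
  also have "\<dots> = smult (dl (k, zz)) (smult (EE n) (smult (dl (\<lambda>i. a i - l i, zz)) (dl (zz, \<lambda>i. b i + (l i - a i)))))"
    unfolding wmul_yd dl_split[of "\<lambda>i. a i - l i" "\<lambda>i. b i + (l i - a i)"] by simp
  also have "\<dots> = (if \<forall>i. a i \<le> l i then Ek n k (\<lambda>i. b i + (l i - a i)) else szero)"
  proof (cases "\<forall>i. a i \<le> l i")
    case True
    hence "(\<lambda>i. a i - l i) = zz" by (simp add: fun_eq_iff)
    thus ?thesis using True by (simp add: sone_dl[symmetric] Ek_def xp_def yp_def)
  next
    case False
    hence "(\<lambda>i. a i - l i) \<noteq> zz" by (simp add: fun_eq_iff)
    thus ?thesis using False ab by (subst if_not_P[OF False]) (simp add: EE_x_zero2 idx_diff)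
  qed
  finally show ?thesis .
qed

lemma D_prod:
  assumes "k \<in> idx n" "l \<in> idx n" "k' \<in> idx n" "l' \<in> idx n"
  shows "smult (Ek n k l) (Ek n k' l') = (if l = k' then Ek n k l' else szero)"
proof -
  have w: "(\<lambda>i. k' i - l i, \<lambda>i. l i - k' i) \<in> words n"
    using assms by (simp add: words_def idx_def)
  have "smult (Ek n k l) (Ek n k' l') = smult (dl (k, zz)) (smult (EE n) (smult (dl (wmul (zz, l) (k', zz))) (smult (EE n) (dl (zz, l')))))"
    by (simp add: Ek_def xp_def yp_def smult_dl2)
  also have "\<dots> = smult (dl (k, zz)) (if (\<lambda>i. k' i - l i, \<lambda>i. l i - k' i) = (zz, zz) then smult (EE n) (dl (zz, l')) else szero)"
    by (simp only: wmul_yx core2[OF w FS_dl])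
  also have "((\<lambda>i. k' i - l i, \<lambda>i. l i - k' i) = (zz, zz)) = (l = k')"
    by (auto simp: fun_eq_iff intro: antisym)
  finally have eq: "smult (Ek n k l) (Ek n k' l') = smult (dl (k, zz)) (if l = k' then smult (EE n) (dl (zz, l')) else szero)" .
  show ?thesis by (simp only: eq) (cases "l = k'", simp_all add: Ek_def[of n k l'] xp_def yp_def)
qed

lemma Ek_zz_zz: "Ek n zz zz = EE n"
  by (simp add: Ek_def xp_def yp_def sone_dl[symmetric])

lemma corner_dl:
  assumes "(k, l) \<in> words n" "p \<in> idx n" "q \<in> idx n"
  shows "smult (Ek n zz p) (smult (dl (k, l)) (Ek n q zz)) =
     (if wmul (wmul (zz, p) (k, l)) (q, zz) = (zz, zz) then EE n else szero)"
proof -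
  have w: "wmul (wmul (zz, p) (k, l)) (q, zz) \<in> words n"
    using assms by (intro wmul_words) (auto simp: words_def idx_def)
  obtain c d where cd: "wmul (wmul (zz, p) (k, l)) (q, zz) = (c, d)" by fastforce
  have "smult (Ek n zz p) (smult (dl (k, l)) (Ek n q zz)) =
      smult (EE n) (smult (dl (wmul (wmul (zz, p) (k, l)) (q, zz))) (EE n))"
    by (simp add: Ek_def xp_def yp_def smult_dl2 sone_dl[symmetric] wmul_assoc)
  also have "\<dots> = (if wmul (wmul (zz, p) (k, l)) (q, zz) = (zz, zz) then EE n else szero)"
    using core0[of c d n] w cd by simp
  finally show ?thesis .
qed




definition gu :: "nat \<Rightarrow> nat \<Rightarrow> nat \<Rightarrow> word \<Rightarrow> 'k::field" where
  "gu i k l = smult (xp (ke i k)) (smult (Pm i) (yp (ke i l)))"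

lemma FS_gu[simp]: "gu i k l \<in> FS" by (simp add: gu_def)

lemma ke_0: "ke i 0 = zz" by (simp add: ke_def fun_eq_iff)

lemma X_dl: "X i = dl (ei i, zz)" by (simp add: X_def dl_def ei_def)
lemma Y_dl: "Y i = dl (zz, ei i)" by (simp add: Y_def dl_def ei_def)

lemma spow_X: "spow (X i) k = (xp (ke i k) :: word \<Rightarrow> 'k::field)"
proof (induction k)
  case 0 thus ?case by (simp add: spow_def xp_def ke_0 sone_dl)
next
  case (Suc k)
  have w: "wmul (ei i, zz) (ke i k, zz) = (ke i (Suc k), zz)" by (simp add: wmul_def ke_def ei_def fun_eq_iff)
  have "(spow (X i) (Suc k) :: word \<Rightarrow> 'k) = smult (X i) (spow (X i) k)" by (simp add: spow_def)
  also have "\<dots> = smult (dl (ei i, zz)) (dl (ke i k, zz))" by (simp only: Suc) (simp add: X_dl xp_def)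
  also have "\<dots> = xp (ke i (Suc k))" by (simp add: smult_dl w xp_def)
  finally show ?case .
qed

lemma spow_Y: "spow (Y i) k = (yp (ke i k) :: word \<Rightarrow> 'k::field)"
proof (induction k)
  case 0 thus ?case by (simp add: spow_def yp_def ke_0 sone_dl)
next
  case (Suc k)
  have w: "wmul (zz, ei i) (zz, ke i k) = (zz, ke i (Suc k))" by (simp add: wmul_def ke_def ei_def fun_eq_iff)
  have "(spow (Y i) (Suc k) :: word \<Rightarrow> 'k) = smult (Y i) (spow (Y i) k)" by (simp add: spow_def)
  also have "\<dots> = smult (dl (zz, ei i)) (dl (zz, ke i k))" by (simp only: Suc) (simp add: Y_dl yp_def)
  also have "\<dots> = yp (ke i (Suc k))" by (simp add: smult_dl w yp_def)
  finally show ?case .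
qed

lemma gen_gu: "ssub (smult (spow (X i) k) (spow (Y i) l)) (smult (spow (X i) (Suc k)) (spow (Y i) (Suc l))) = gu i k l"
proof -
  have 1: "wmul (ke i k, zz) (zz, ke i l) = (ke i k, ke i l)" by (simp add: wmul_def)
  have 2: "wmul (ke i (Suc k), zz) (zz, ke i (Suc l)) = (ke i (Suc k), ke i (Suc l))" by (simp add: wmul_def)
  have 3: "wmul (ke i k, zz) (wmul (ei i, ei i) (zz, ke i l)) = (ke i (Suc k), ke i (Suc l))"
    by (simp add: wmul_def ke_def ei_def fun_eq_iff)
  show ?thesis
    by (simp add: spow_X spow_Y gu_def Pm_def xp_def yp_def smult_ssub_left smult_ssub_right smult_dl 1 2 3 sone_dl[symmetric])
qed

lemma Fi_gu: "Fi i = sspan {gu i k l | k l. True}"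
  unfolding Fi_def gen_gu ..

definition rs :: "(nat \<Rightarrow> nat) \<Rightarrow> nat list \<Rightarrow> nat \<Rightarrow> nat" where
  "rs k xs = (\<lambda>j. if j \<in> set xs then k j else 0)"

lemma smult_swap: "f \<in> FS \<Longrightarrow> g \<in> FS \<Longrightarrow> h \<in> FS \<Longrightarrow> smult f g = smult g f \<Longrightarrow> smult f (smult g h) = smult g (smult f h)"
  by (metis smult_assoc)

lemma dl_yx_comm:
  assumes "\<forall>i. b i = 0 \<or> K i = 0"
  shows "smult (yp b) (xp K) = (smult (xp K) (yp b) :: word \<Rightarrow> 'k::field)"
proof -
  have h: "b x = 0 \<or> K x = 0" for x using assms[rule_format, of x] .
  have "fst (wmul (zz, b) (K, zz)) x = fst (wmul (K, zz) (zz, b)) x" for x using h[of x] by (auto simp: wmul_def)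
  moreover have "snd (wmul (zz, b) (K, zz)) x = snd (wmul (K, zz) (zz, b)) x" for x using h[of x] by (auto simp: wmul_def)
  ultimately have "wmul (zz, b) (K, zz) = wmul (K, zz) (zz, b)" by (simp add: prod_eq_iff fun_eq_iff)
  thus ?thesis by (simp add: xp_def yp_def smult_dl)
qed

lemma VS_xp: "VS (xp K) \<subseteq> {i. K i \<noteq> 0}" by (auto simp: xp_def VS_dl vars_def)
lemma VS_yp: "VS (yp K) \<subseteq> {i. K i \<noteq> 0}" by (auto simp: yp_def VS_dl vars_def)

lemma prod_gu:
  assumes "distinct xs"
  shows "foldr smult (map (\<lambda>i. gu i (k i) (l i)) xs) sone =
     (smult (xp (rs k xs)) (smult (PP xs) (yp (rs l xs))) :: word \<Rightarrow> 'k::field)"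
  using assms
proof (induction xs)
  case Nil thus ?case by (simp add: rs_def xp_def yp_def sone_dl[symmetric])
next
  case (Cons j rest)
  hence IH: "foldr smult (map (\<lambda>i. gu i (k i) (l i)) rest) sone =
     (smult (xp (rs k rest)) (smult (PP rest) (yp (rs l rest))) :: word \<Rightarrow> 'k)"
    and nj: "j \<notin> set rest" by auto
  let ?K = "rs k rest" and ?L = "rs l rest" and ?a = "ke j (k j)" and ?b = "ke j (l j)"
  have disj: "\<forall>i. ?b i = 0 \<or> ?K i = 0" using nj by (auto simp: rs_def ke_def)
  have c1: "smult (yp ?b) (xp ?K) = (smult (xp ?K) (yp ?b) :: word \<Rightarrow> 'k)" by (rule dl_yx_comm[OF disj])
  have c2: "smult (yp ?b) (PP rest) = (smult (PP rest) (yp ?b) :: word \<Rightarrow> 'k)"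
    by (rule smult_comm_VS) (use VS_yp[of ?b] VS_PP[of rest] nj in \<open>auto simp: ke_def split: if_splits\<close>)
  have c3: "smult (Pm j) (xp ?K) = (smult (xp ?K) (Pm j) :: word \<Rightarrow> 'k)"
    by (rule smult_comm_VS) (use VS_xp[of ?K] VS_Pm[of j] nj in \<open>auto simp: rs_def\<close>)
  have "(foldr smult (map (\<lambda>i. gu i (k i) (l i)) (j # rest)) sone :: word \<Rightarrow> 'k) =
     smult (gu j (k j) (l j)) (foldr smult (map (\<lambda>i. gu i (k i) (l i)) rest) sone)" by simp
  also have "\<dots> = smult (gu j (k j) (l j)) (smult (xp ?K) (smult (PP rest) (yp ?L)))" by (simp only: IH)
  also have "\<dots> = smult (xp ?a) (smult (Pm j) (smult (yp ?b) (smult (xp ?K) (smult (PP rest) (yp ?L))))) "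
    by (simp add: gu_def)
  also have "\<dots> = smult (xp ?a) (smult (Pm j) (smult (xp ?K) (smult (yp ?b) (smult (PP rest) (yp ?L)))))"
    by (simp add: smult_swap[OF _ _ _ c1])
  also have "\<dots> = smult (xp ?a) (smult (Pm j) (smult (xp ?K) (smult (PP rest) (smult (yp ?b) (yp ?L)))))"
    by (simp add: smult_swap[OF _ _ _ c2])
  also have "\<dots> = smult (xp ?a) (smult (xp ?K) (smult (Pm j) (smult (PP rest) (smult (yp ?b) (yp ?L)))))"
    by (simp add: smult_swap[OF _ _ _ c3])
  also have "\<dots> = smult (xp (rs k (j # rest))) (smult (PP (j # rest)) (yp (rs l (j # rest))))"
  proof -
    have "wmul (?a, zz) (?K, zz) = (rs k (j # rest), zz)"
      using nj by (auto simp: wmul_def rs_def ke_def fun_eq_iff)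
    moreover have "wmul (zz, ?b) (zz, ?L) = (zz, rs l (j # rest))"
      using nj by (auto simp: wmul_def rs_def ke_def fun_eq_iff)
    ultimately show ?thesis by (simp add: xp_def yp_def smult_dl2 smult_dl)
  qed
  finally show ?case .
qed

lemma rs_upt: "k \<in> idx n \<Longrightarrow> rs k [0..<n] = k"
  by (auto simp: rs_def idx_def fun_eq_iff)

lemma Ek_prod: "k \<in> idx n \<Longrightarrow> l \<in> idx n \<Longrightarrow>
   Ek n k l = (foldr smult (map (\<lambda>i. gu i (k i) (l i)) [0..<n]) sone :: word \<Rightarrow> 'k::field)"
  by (simp add: prod_gu rs_upt Ek_def EE_def)

lemma FS_foldr: "(\<forall>i\<in>set xs. g i \<in> FS) \<Longrightarrow> foldr smult (map g xs) sone \<in> FS"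
  by (induction xs) auto

lemma foldr_span:
  assumes "distinct xs" "\<forall>i\<in>set xs. f i \<in> sspan (A i)" "\<And>i. A i \<subseteq> FS"
  shows "foldr smult (map f xs) sone \<in> sspan {foldr smult (map g xs) sone | g. \<forall>i\<in>set xs. g i \<in> A i}"
  using assms(1,2)
proof (induction xs)
  case Nil thus ?case by (auto intro: sspan.base)
next
  case (Cons j rest)
  let ?G = "{foldr smult (map g rest) sone | g. \<forall>i\<in>set rest. g i \<in> A i}"
  let ?G' = "{foldr smult (map g (j # rest)) sone | g. \<forall>i\<in>set (j # rest). g i \<in> A i}"
  have nj: "j \<notin> set rest" using Cons by auto
  have R: "foldr smult (map f rest) sone \<in> sspan ?G" using Cons by auto
  have GFS: "?G \<subseteq> FS"
  proof
    fix x assume "x \<in> ?G"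
    then obtain g where "\<forall>i\<in>set rest. g i \<in> A i" "x = foldr smult (map g rest) sone" by blast
    moreover have "\<forall>i\<in>set rest. g i \<in> FS" using calculation(1) assms(3) by blast
    ultimately show "x \<in> FS" using FS_foldr by metis
  qed
  have S: "smult (f j) (foldr smult (map f rest) sone) \<in> sspan {smult u v | u v. u \<in> A j \<and> v \<in> ?G}"
    by (rule sspan_bilin) (use Cons R GFS assms(3) in auto)
  have T: "{smult u v | u v. u \<in> A j \<and> v \<in> ?G} \<subseteq> ?G'"
  proof
    fix x assume "x \<in> {smult u v | u v. u \<in> A j \<and> v \<in> ?G}"
    then obtain u g where ug: "u \<in> A j" "\<forall>i\<in>set rest. g i \<in> A i" "x = smult u (foldr smult (map g rest) sone)"
      by blast
    have m: "map (g(j := u)) (j # rest) = u # map g rest" using nj by (auto intro: map_cong)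
    have "x = foldr smult (map (g(j := u)) (j # rest)) sone" using ug(3) by (subst m) simp
    moreover have "\<forall>i\<in>set (j # rest). (g(j := u)) i \<in> A i" using ug by auto
    ultimately show "x \<in> ?G'" by blast
  qed
  have "smult (f j) (foldr smult (map f rest) sone) \<in> sspan ?G'" using S sspan_mono[OF T] by blast
  thus ?case by simp
qed

definition Es :: "nat \<Rightarrow> (word \<Rightarrow> 'k::field) set" where
  "Es n = {Ek n k l | k l. k \<in> idx n \<and> l \<in> idx n}"

lemma Es_FS: "Es n \<subseteq> FS" by (auto simp: Es_def)

lemma Es_Fn: "Es n \<subseteq> Fn n"
proof
  fix x assume "x \<in> Es n"
  then obtain k l where kl: "k \<in> idx n" "l \<in> idx n" "x = Ek n k l" by (auto simp: Es_def)
  have "\<forall>i<n. gu i (k i) (l i) \<in> Fi i" by (auto simp: Fi_gu intro: sspan.base)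
  hence "x \<in> {foldr smult (map f [0..<n]) sone | f. \<forall>i<n. f i \<in> Fi i}"
    using kl Ek_prod by blast
  thus "x \<in> Fn n" unfolding Fn_def by (rule sspan.base)
qed

lemma Fn_Es: "Fn n \<subseteq> sspan (Es n)"
  unfolding Fn_def
proof (rule sspan_idem, rule subsetI)
  fix x assume "x \<in> {foldr smult (map f [0..<n]) sone | f. \<forall>i<n. f i \<in> Fi i}"
  then obtain f where f: "\<forall>i<n. f i \<in> Fi i" "x = foldr smult (map f [0..<n]) sone" by blast
  let ?U = "\<lambda>i. {gu i k l | k l. True}"
  have "x \<in> sspan {foldr smult (map g [0..<n]) sone | g. \<forall>i\<in>set [0..<n]. g i \<in> ?U i}"
    unfolding f(2) by (rule foldr_span) (use f(1) in \<open>auto simp: Fi_gu\<close>)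
  moreover have "{foldr smult (map g [0..<n]) sone | g. \<forall>i\<in>set [0..<n]. g i \<in> ?U i} \<subseteq> Es n"
  proof
    fix y assume "y \<in> {foldr smult (map g [0..<n]) sone | g. \<forall>i\<in>set [0..<n]. g i \<in> ?U i}"
    then obtain g where g0: "\<forall>i\<in>set [0..<n]. g i \<in> ?U i" "y = foldr smult (map g [0..<n]) sone" by blast
    have g: "\<forall>i<n. \<exists>k l. g i = gu i k l" "y = foldr smult (map g [0..<n]) sone" using g0 by auto
    define K where "K = (\<lambda>i. if i < n then (SOME k. \<exists>l. g i = gu i k l) else 0)"
    define L where "L = (\<lambda>i. if i < n then (SOME l. g i = gu i (K i) l) else 0)"
    have gi: "g i = gu i (K i) (L i)" if "i < n" for i
    proof -
      have "\<exists>l. g i = gu i (K i) l" using g(1) that unfolding K_def by (auto intro: someI_ex)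
      thus ?thesis unfolding L_def using that by (auto intro: someI_ex)
    qed
    have KL: "K \<in> idx n" "L \<in> idx n" by (auto simp: idx_def K_def L_def)
    have "y = foldr smult (map (\<lambda>i. gu i (K i) (L i)) [0..<n]) sone"
      unfolding g(2) by (rule arg_cong[where f = "\<lambda>l. foldr smult l sone"], rule map_cong) (auto simp: gi)
    also have "\<dots> = Ek n K L" by (rule Ek_prod[OF KL, symmetric])
    finally show "y \<in> Es n" using KL by (auto simp: Es_def)
  qed
  ultimately show "x \<in> sspan (Es n)" using sspan_mono by blast
qed

lemma Fn_eq: "Fn n = sspan (Es n)"
proof
  show "Fn n \<subseteq> sspan (Es n)" by (rule Fn_Es)
  show "sspan (Es n) \<subseteq> Fn n" unfolding Fn_def by (rule sspan_idem) (use Es_Fn[of n] in \<open>auto simp: Fn_def\<close>)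
qed




lemma sscale_eq_szero: "(sscale c f = szero) = (c = 0 \<or> f = szero)"
  by (auto simp: sscale_def szero_def fun_eq_iff)

lemma sadd_szero_right[simp]: "sadd f szero = f" by (simp add: sadd_def szero_def)
lemma sscale_szero[simp]: "sscale c szero = szero" by (simp add: sscale_def szero_def)
lemma sscale_sscale: "sscale c (sscale d f) = sscale (c * d) f" by (simp add: sscale_def fun_eq_iff)
lemma sscale_one[simp]: "sscale 1 f = f" by (simp add: sscale_def)

lemma smult_sscale_sone: "x \<in> FS \<Longrightarrow> smult (sscale c sone) x = sscale c x"
  by (simp add: smult_sscale_left)

lemma left_ideal_scale: "left_ideal n I \<Longrightarrow> x \<in> I \<Longrightarrow> sscale c x \<in> I"
proof -
  assume a: "left_ideal n I" "x \<in> I"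
  hence "x \<in> FS" by (auto simp: left_ideal_def dest: Sn_FS)
  hence "sscale c x = smult (sscale c sone) x" by (simp add: smult_sscale_sone)
  thus ?thesis using a by (auto simp: left_ideal_def)
qed

lemma right_ideal_scale: "right_ideal n I \<Longrightarrow> x \<in> I \<Longrightarrow> sscale c x \<in> I"
proof -
  assume a: "right_ideal n I" "x \<in> I"
  hence "x \<in> FS" by (auto simp: right_ideal_def dest: Sn_FS)
  hence "sscale c x = smult x (sscale c sone)" by (simp add: smult_sscale_right)
  thus ?thesis using a by (auto simp: right_ideal_def)
qed

lemma left_ideal_span: "left_ideal n I \<Longrightarrow> A \<subseteq> I \<Longrightarrow> sspan A \<subseteq> I"
  by (auto elim!: sspan_sub intro: left_ideal_scale simp: left_ideal_def)

lemma Sn_sspan: "A \<subseteq> Sn n \<Longrightarrow> sspan A \<subseteq> Sn n"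
  by (auto elim!: sspan_sub)

lemma Es_Sn: "Es n \<subseteq> Sn n" by (auto simp: Es_def)

lemma Fn_Sn: "Fn n \<subseteq> Sn n" unfolding Fn_eq by (rule Sn_sspan[OF Es_Sn])

lemma Fn_FS: "x \<in> Fn n \<Longrightarrow> x \<in> FS" using Fn_Sn Sn_FS by blast

lemma Ek_in_span: "k \<in> idx n \<Longrightarrow> l \<in> idx n \<Longrightarrow> Ek n k l \<in> sspan (Es n)"
  by (auto simp: Es_def intro!: sspan.base)

lemma words_supp: "s \<in> Sn n \<Longrightarrow> u \<in> supp s \<Longrightarrow> u \<in> words n" by (auto simp: Sn_def)

lemma Fn_left: "s \<in> Sn n \<Longrightarrow> a \<in> Fn n \<Longrightarrow> smult s a \<in> Fn n"
proof -
  assume s: "s \<in> Sn n" and a: "a \<in> Fn n"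
  have a': "a \<in> sspan (Es n)" using a by (simp add: Fn_eq)
  have "smult s a \<in> sspan {smult u v | u v. u \<in> dl ` supp s \<and> v \<in> Es n}"
    by (rule sspan_bilin[OF FS_sspan_dl[OF Sn_FS[OF s]] a']) (auto simp: Es_def)
  moreover have "{smult u v | u v. u \<in> dl ` supp s \<and> v \<in> Es n} \<subseteq> sspan (Es n)"
  proof
    fix x assume "x \<in> {smult u v | u v. u \<in> dl ` supp s \<and> v \<in> Es n}"
    then obtain w k l where w: "w \<in> supp s" "k \<in> idx n" "l \<in> idx n" "x = smult (dl w) (Ek n k l)"
      by (auto simp: Es_def)
    obtain a b where ab: "w = (a, b)" by fastforce
    have wn: "(a, b) \<in> words n" using words_supp[OF s w(1)] ab by simp
    have "x = (if \<forall>i. b i \<le> k i then Ek n (\<lambda>i. a i + (k i - b i)) l else szero)"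
      using D_left[OF wn w(2,3)] w(4) ab by simp
    moreover have "(\<lambda>i. a i + (k i - b i)) \<in> idx n" using words_idx[OF wn] w(2) by (simp add: idx_add_diff)
    ultimately show "x \<in> sspan (Es n)" using w by (auto intro: Ek_in_span sspan.zero)
  qed
  ultimately show ?thesis unfolding Fn_eq using sspan_idem by blast
qed

lemma Fn_right: "s \<in> Sn n \<Longrightarrow> a \<in> Fn n \<Longrightarrow> smult a s \<in> Fn n"
proof -
  assume s: "s \<in> Sn n" and a: "a \<in> Fn n"
  have a': "a \<in> sspan (Es n)" using a by (simp add: Fn_eq)
  have "smult a s \<in> sspan {smult u v | u v. u \<in> Es n \<and> v \<in> dl ` supp s}"
    by (rule sspan_bilin[OF a' FS_sspan_dl[OF Sn_FS[OF s]]]) (auto simp: Es_def)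
  moreover have "{smult u v | u v. u \<in> Es n \<and> v \<in> dl ` supp s} \<subseteq> sspan (Es n)"
  proof
    fix x assume "x \<in> {smult u v | u v. u \<in> Es n \<and> v \<in> dl ` supp s}"
    then obtain w k l where w: "w \<in> supp s" "k \<in> idx n" "l \<in> idx n" "x = smult (Ek n k l) (dl w)"
      by (auto simp: Es_def)
    obtain a b where ab: "w = (a, b)" by fastforce
    have wn: "(a, b) \<in> words n" using words_supp[OF s w(1)] ab by simp
    have "x = (if \<forall>i. a i \<le> l i then Ek n k (\<lambda>i. b i + (l i - a i)) else szero)"
      using D_right[OF wn w(2,3)] w(4) ab by simp
    moreover have "(\<lambda>i. b i + (l i - a i)) \<in> idx n" using words_idx[OF wn] w(3) by (simp add: idx_add_diff)
    ultimately show "x \<in> sspan (Es n)" using w by (auto intro: Ek_in_span sspan.zero)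
  qed
  ultimately show ?thesis unfolding Fn_eq using sspan_idem by blast
qed

lemma Fn_zero: "szero \<in> Fn n" by (simp add: Fn_def sspan.zero)
lemma Fn_add: "a \<in> Fn n \<Longrightarrow> b \<in> Fn n \<Longrightarrow> sadd a b \<in> Fn n" by (simp add: Fn_def sspan.add)
lemma Fn_scale: "a \<in> Fn n \<Longrightarrow> sscale c a \<in> Fn n" by (simp add: Fn_def sspan.scale)

lemma Fn_ideal: "ideal n (Fn n)"
  unfolding ideal_def left_ideal_def right_ideal_def
  by (intro conjI ballI Fn_Sn Fn_zero Fn_add Fn_left Fn_right) (use Fn_Sn in auto)

lemma Ek_Fn: "k \<in> idx n \<Longrightarrow> l \<in> idx n \<Longrightarrow> Ek n k l \<in> Fn n"
  using Es_Fn by (auto simp: Es_def)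

lemma EE_Fn: "EE n \<in> Fn n" using Ek_Fn[of zz n zz] by (simp add: Ek_zz_zz)

lemma Fn_nz: "Fn n \<noteq> {(szero :: word \<Rightarrow> 'k::field)}"
  using EE_Fn[of n] EE_nz[where 'k = 'k] by auto

lemma sspan_Fn: "sspan (Fn n) = Fn n"
proof
  show "sspan (Fn n) \<subseteq> Fn n" by (auto elim!: sspan_sub intro: Fn_zero Fn_add Fn_scale)
  show "Fn n \<subseteq> sspan (Fn n)" by (auto intro: sspan.base)
qed

definition lin :: "((word \<Rightarrow> 'k::field) \<Rightarrow> (word \<Rightarrow> 'k)) \<Rightarrow> bool" where
  "lin L \<longleftrightarrow> L szero = szero \<and> (\<forall>a\<in>FS. \<forall>b\<in>FS. L (sadd a b) = sadd (L a) (L b))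
     \<and> (\<forall>c. \<forall>a\<in>FS. L (sscale c a) = sscale c (L a))"

lemma lin_corner: "E1 \<in> FS \<Longrightarrow> E2 \<in> FS \<Longrightarrow> lin (\<lambda>s. smult E1 (smult s E2))"
  by (simp add: lin_def smult_sadd_left smult_sadd_right smult_sscale_left smult_sscale_right)

lemma lin_single:
  assumes "lin L" "s \<in> FS" "\<And>u. u \<in> supp s \<Longrightarrow> u \<noteq> w0 \<Longrightarrow> L (dl u) = szero"
  shows "L s = sscale (s w0) (L (dl w0))"
proof -
  have s: "s = sadd (sscale (s w0) (dl w0)) (s(w0 := 0))"
    by (auto simp: fun_eq_iff sadd_def sscale_def dl_def)
  have fin: "finite (supp s)" using assms(2) by (simp add: FS_def)
  have r: "s(w0 := 0) \<in> sspan (dl ` (supp s - {w0}))"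
    by (rule sspan_dl) (use fin in \<open>auto simp: supp_def\<close>)
  have rFS: "s(w0 := 0) \<in> FS" using fin by (auto simp: FS_def supp_def elim: finite_subset[rotated])
  have h1: "L (s(w0 := 0)) \<in> sspan (L ` dl ` (supp s - {w0}))"
    by (rule sspan_linear[OF r]) (use assms(1) in \<open>auto simp: lin_def\<close>)
  have h2: "L ` dl ` (supp s - {w0}) \<subseteq> {szero}" using assms(3) by auto
  have "L (s(w0 := 0)) \<in> {szero}"
    by (rule sspan_sub[OF h1 h2]) simp_all
  hence "L (s(w0 := 0)) = szero" by simp
  moreover have "L s = sadd (sscale (s w0) (L (dl w0))) (L (s(w0 := 0)))"
    using assms(1) rFS by (subst s) (simp add: lin_def)
  ultimately show ?thesis by simp
qed




definition cor :: "nat \<Rightarrow> (nat \<Rightarrow> nat) \<Rightarrow> (nat \<Rightarrow> nat) \<Rightarrow> (word \<Rightarrow> 'k::field) \<Rightarrow> (word \<Rightarrow> 'k)" where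
  "cor n p q s = smult (Ek n zz p) (smult s (Ek n q zz))"

lemma lin_cor: "lin (cor n p q)"
  unfolding cor_def by (rule lin_corner) simp_all

lemma cor_cond: "(wmul (wmul (zz, p) (k, l)) (q, zz) = (zz, zz)) = ((\<forall>i. k i \<le> p i) \<and> q = (\<lambda>i. l i + (p i - k i)))"
  by (auto simp: wmul_def fun_eq_iff intro: antisym)

lemma sum_eq_le:
  assumes "k \<in> idx n" "p \<in> idx n" "\<forall>i. k i \<le> p i" "(\<Sum>i<n. p i) \<le> (\<Sum>i<n. k i)"
  shows "k = p"
proof (rule ccontr)
  assume "k \<noteq> p"
  then obtain j where j: "k j \<noteq> p j" by (auto simp: fun_eq_iff)
  have "j < n" using j assms(1,2) by (auto simp: idx_def intro: ccontr)
  hence "(\<Sum>i<n. k i) < (\<Sum>i<n. p i)"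
    using assms(3) j by (intro sum_strict_mono_ex1) (auto simp: le_less)
  thus False using assms(4) by simp
qed

lemma key:
  assumes a: "(a :: word \<Rightarrow> 'k::field) \<in> Sn n" "a \<noteq> szero"
  shows "\<exists>p q. p \<in> idx n \<and> q \<in> idx n \<and> a (p, q) \<noteq> 0 \<and> cor n p q a = sscale (a (p, q)) (EE n)"
proof -
  have "supp a \<noteq> {}" using a(2) by (auto simp: supp_def szero_def fun_eq_iff)
  then obtain w1 where "w1 \<in> supp a" by blast
  then obtain w0 where w0: "w0 \<in> supp a" "\<forall>w. w \<in> supp a \<longrightarrow> (\<Sum>i<n. fst w0 i) \<le> (\<Sum>i<n. fst w i)"
    using ex_has_least_nat[of "\<lambda>w. w \<in> supp a" w1 "\<lambda>w. \<Sum>i<n. fst w i"] by blast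
  obtain p q where pq: "w0 = (p, q)" by fastforce
  have pqw: "(p, q) \<in> words n" using w0(1) pq a(1) by (auto simp: Sn_def)
  hence pqi: "p \<in> idx n" "q \<in> idx n" using words_idx by auto
  have "cor n p q a = sscale (a (p, q)) (cor n p q (dl (p, q)))"
  proof (rule lin_single[OF lin_cor Sn_FS[OF a(1)]])
    fix u assume u: "u \<in> supp a" "u \<noteq> (p, q)"
    obtain k l where kl: "u = (k, l)" by fastforce
    have klw: "(k, l) \<in> words n" using u(1) kl a(1) by (auto simp: Sn_def)
    hence kli: "k \<in> idx n" "l \<in> idx n" using words_idx by auto
    have "\<not> ((\<forall>i. k i \<le> p i) \<and> q = (\<lambda>i. l i + (p i - k i)))"
    proof
      assume c: "(\<forall>i. k i \<le> p i) \<and> q = (\<lambda>i. l i + (p i - k i))"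
      have "(\<Sum>i<n. p i) \<le> (\<Sum>i<n. k i)" using w0(2) u(1) kl pq by fastforce
      hence "k = p" using sum_eq_le[OF kli(1) pqi(1)] c by blast
      hence "l = q" using c by (auto simp: fun_eq_iff)
      thus False using u(2) kl \<open>k = p\<close> by simp
    qed
    thus "cor n p q (dl u) = szero"
      unfolding cor_def kl corner_dl[OF klw pqi] cor_cond by (rule if_not_P)
  qed
  moreover have "cor n p q (dl (p, q)) = (EE n :: word \<Rightarrow> 'k)"
    unfolding cor_def corner_dl[OF pqw pqi] cor_cond by simp
  ultimately show ?thesis using pqi w0(1) pq by (auto simp: supp_def)
qed

lemma cor_zz:
  assumes a: "(a :: word \<Rightarrow> 'k::field) \<in> Sn n"
  shows "smult (EE n) (smult a (EE n)) = sscale (a (zz, zz)) (EE n)"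
proof -
  have "cor n zz zz a = sscale (a (zz, zz)) (cor n zz zz (dl (zz, zz)))"
  proof (rule lin_single[OF lin_cor Sn_FS[OF a(1)]])
    fix u assume u: "u \<in> supp a" "u \<noteq> (zz, zz)"
    obtain k l where kl: "u = (k, l)" by fastforce
    have klw: "(k, l) \<in> words n" using u(1) kl a(1) by (auto simp: Sn_def)
    show "cor n zz zz (dl u) = szero"
      unfolding cor_def Ek_zz_zz kl core0[OF klw] by (rule if_not_P) (use u(2) kl in simp)
  qed
  moreover have "cor n zz zz (dl (zz, zz)) = (EE n :: word \<Rightarrow> 'k)"
    unfolding cor_def Ek_zz_zz core0[OF zz_words] by simp
  ultimately show ?thesis by (simp add: cor_def Ek_zz_zz)
qed

lemma cor_scalar:
  assumes a: "a \<in> Sn n" and pq: "p \<in> idx n" "q \<in> idx n"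
  shows "\<exists>c. cor n p q a = sscale c (EE n)"
proof -
  have h1: "cor n p q a \<in> sspan (cor n p q ` dl ` supp a)"
    by (rule sspan_linear[OF FS_sspan_dl[OF Sn_FS[OF a]]]) (use lin_cor[of n p q] in \<open>auto simp: lin_def\<close>)
  have h2: "cor n p q ` dl ` supp a \<subseteq> range (\<lambda>c. sscale c (EE n))"
  proof
    fix x assume "x \<in> cor n p q ` dl ` supp a"
    then obtain u where u: "u \<in> supp a" "x = cor n p q (dl u)" by blast
    obtain k l where kl: "u = (k, l)" by fastforce
    have klw: "(k, l) \<in> words n" using u(1) kl a by (auto simp: Sn_def)
    have "x = EE n \<or> x = szero"
      unfolding u(2) kl cor_def corner_dl[OF klw pq] by simp
    moreover have "EE n \<in> range (\<lambda>c. sscale c (EE n))" by (rule range_eqI[where x = 1]) simp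
    moreover have "szero \<in> range (\<lambda>c. sscale c (EE n))" by (rule range_eqI[where x = 0]) (simp add: sscale_def szero_def)
    ultimately show "x \<in> range (\<lambda>c. sscale c (EE n))" by blast
  qed
  have "cor n p q a \<in> range (\<lambda>c. sscale c (EE n))"
  proof (rule sspan_sub[OF h1 h2])
    show "szero \<in> range (\<lambda>c. sscale c (EE n))" by (rule range_eqI[where x = 0]) (simp add: sscale_def szero_def)
    show "sadd x y \<in> range (\<lambda>c. sscale c (EE n))" if xr: "x \<in> range (\<lambda>c. sscale c (EE n))" and yr: "y \<in> range (\<lambda>c. sscale c (EE n))" for x y
    proof -
      obtain c d where "x = sscale c (EE n)" "y = sscale d (EE n)" using xr yr by blast
      hence "sadd x y = sscale (c + d) (EE n)" by (simp add: sadd_def sscale_def fun_eq_iff distrib_right)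
      thus ?thesis by blast
    qed
    show "sscale c x \<in> range (\<lambda>c. sscale c (EE n))" if xr: "x \<in> range (\<lambda>c. sscale c (EE n))" for c x
    proof -
      obtain d where "x = sscale d (EE n)" using xr by blast
      hence "sscale c x = sscale (c * d) (EE n)" by (simp add: sscale_sscale)
      thus ?thesis by blast
    qed
  qed
  thus ?thesis by blast
qed




lemma sscale_EE_nz: "c \<noteq> 0 \<Longrightarrow> sscale c (EE n) \<noteq> (szero :: word \<Rightarrow> 'k::field)"
  using EE_nz[where 'k = 'k] by (simp add: sscale_eq_szero)

lemma key_left:
  assumes "(a :: word \<Rightarrow> 'k::field) \<in> Sn n" "a \<noteq> szero"
  shows "\<exists>p. p \<in> idx n \<and> smult (Ek n zz p) a \<noteq> szero"
proof -
  obtain p q where pq: "p \<in> idx n" "q \<in> idx n" "a (p, q) \<noteq> 0" "cor n p q a = sscale (a (p, q)) (EE n)"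
    using key[OF assms] by blast
  have "smult (Ek n zz p) a \<noteq> szero"
  proof
    assume h: "smult (Ek n zz p) a = szero"
    have "cor n p q a = smult (smult (Ek n zz p) a) (Ek n q zz)"
      using assms(1) by (simp add: cor_def Sn_FS)
    also have "\<dots> = szero" by (simp add: h)
    finally show False using pq(3,4) sscale_EE_nz by metis
  qed
  thus ?thesis using pq(1) by blast
qed

lemma key_right:
  assumes "(a :: word \<Rightarrow> 'k::field) \<in> Sn n" "a \<noteq> szero"
  shows "\<exists>q. q \<in> idx n \<and> smult a (Ek n q zz) \<noteq> szero"
proof -
  obtain p q where pq: "p \<in> idx n" "q \<in> idx n" "a (p, q) \<noteq> 0" "cor n p q a = sscale (a (p, q)) (EE n)"
    using key[OF assms] by blast
  have "smult a (Ek n q zz) \<noteq> szero"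
  proof
    assume h: "smult a (Ek n q zz) = szero"
    have "cor n p q a = szero" by (simp add: cor_def h)
    thus False using pq(3,4) sscale_EE_nz by metis
  qed
  thus ?thesis using pq(2) by blast
qed

lemma part2:
  "\<forall>a \<in> Sn n. a \<noteq> (szero :: word \<Rightarrow> 'k::field) \<longrightarrow>
           (\<exists>f \<in> Fn n. smult f a \<noteq> szero) \<and> (\<exists>f \<in> Fn n. smult a f \<noteq> szero)"
proof (intro ballI impI conjI)
  fix a :: "word \<Rightarrow> 'k" assume a: "a \<in> Sn n" "a \<noteq> szero"
  obtain p where "p \<in> idx n" "smult (Ek n zz p) a \<noteq> szero" using key_left[OF a] by blast
  thus "\<exists>f \<in> Fn n. smult f a \<noteq> szero" using Ek_Fn[of zz n p] by auto
  obtain q where "q \<in> idx n" "smult a (Ek n q zz) \<noteq> szero" using key_right[OF a] by blast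
  thus "\<exists>f \<in> Fn n. smult a f \<noteq> szero" using Ek_Fn[of q n zz] by auto
qed

lemma nz_elem: "szero \<in> N \<Longrightarrow> N \<noteq> {szero} \<Longrightarrow> \<exists>a\<in>N. a \<noteq> szero" by blast

lemma EE_in_ideal:
  assumes I: "ideal n I" and a: "(a :: word \<Rightarrow> 'k::field) \<in> I" "a \<noteq> szero"
  shows "EE n \<in> I"
proof -
  have aS: "a \<in> Sn n" using I a by (auto simp: ideal_def left_ideal_def)
  obtain p q where pq: "p \<in> idx n" "q \<in> idx n" "a (p, q) \<noteq> 0" "cor n p q a = sscale (a (p, q)) (EE n)"
    using key[OF aS a(2)] by blast
  have "smult a (Ek n q zz) \<in> I" using I a pq by (auto simp: ideal_def right_ideal_def)
  hence "smult (Ek n zz p) (smult a (Ek n q zz)) \<in> I" using I pq(1) by (auto simp: ideal_def left_ideal_def)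
  hence "cor n p q a \<in> I" by (simp add: cor_def)
  hence "sscale (inverse (a (p, q))) (cor n p q a) \<in> I" using I by (auto simp: ideal_def intro: left_ideal_scale)
  thus ?thesis using pq(3,4) by (simp add: sscale_sscale)
qed

lemma Ek_factor:
  assumes "k \<in> idx n" "l \<in> idx n"
  shows "Ek n k l = smult (Ek n k zz) (smult (EE n) (Ek n zz l))"
  using assms by (simp add: Ek_zz_zz[symmetric] D_prod)

lemma Fn_min:
  assumes I: "ideal n I" "I \<noteq> {szero :: word \<Rightarrow> 'k::field}"
  shows "Fn n \<subseteq> I"
proof -
  have "szero \<in> I" using I by (auto simp: ideal_def left_ideal_def)
  then obtain a where a: "a \<in> I" "a \<noteq> szero" using nz_elem I(2) by blast
  have E: "EE n \<in> I" by (rule EE_in_ideal[OF I(1) a])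
  have "Es n \<subseteq> I"
  proof
    fix x :: "word \<Rightarrow> 'k" assume "x \<in> Es n"
    then obtain k l where kl: "k \<in> idx n" "l \<in> idx n" "x = Ek n k l" by (auto simp: Es_def)
    have "smult (EE n) (Ek n zz l) \<in> I" using I E kl by (auto simp: ideal_def right_ideal_def)
    hence "smult (Ek n k zz) (smult (EE n) (Ek n zz l)) \<in> I" using I kl by (auto simp: ideal_def left_ideal_def)
    thus "x \<in> I" using Ek_factor[OF kl(1,2), where 'a = 'k] kl(3) by simp
  qed
  moreover have "left_ideal n I" using I(1) by (simp add: ideal_def)
  ultimately show ?thesis unfolding Fn_eq using left_ideal_span by blast
qed

lemma setprod_Fn: "setprod (Fn n) (Fn n) = (Fn n :: (word \<Rightarrow> 'k::field) set)"
proof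
  show "setprod (Fn n) (Fn n) \<subseteq> Fn n"
    unfolding setprod_def
    by (auto elim!: sspan_sub intro: Fn_zero Fn_add Fn_scale Fn_left dest: subsetD[OF Fn_Sn])
  have h: "Es n \<subseteq> {smult a b | a b. a \<in> Fn n \<and> b \<in> (Fn n :: (word \<Rightarrow> 'k) set)}"
  proof
    fix x :: "word \<Rightarrow> 'k" assume "x \<in> Es n"
    then obtain k l where kl: "k \<in> idx n" "l \<in> idx n" "x = Ek n k l" by (auto simp: Es_def)
    have "x = smult (Ek n k zz) (Ek n zz l)" using kl by (simp add: D_prod)
    moreover have "Ek n k zz \<in> Fn n" "Ek n zz l \<in> Fn n" using kl by (simp_all add: Ek_Fn)
    ultimately show "x \<in> {smult a b | a b. a \<in> Fn n \<and> b \<in> Fn n}" by blast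
  qed
  have "sspan (Es n) \<subseteq> sspan {smult a b | a b. a \<in> Fn n \<and> b \<in> (Fn n :: (word \<Rightarrow> 'k) set)}"
    by (rule sspan_mono[OF h])
  thus "Fn n \<subseteq> setprod (Fn n) (Fn n :: (word \<Rightarrow> 'k) set)"
    unfolding setprod_def by (simp only: Fn_eq[of n, symmetric])
qed

lemma ess_left_Fn: "essential_left n (Fn n :: (word \<Rightarrow> 'k::field) set)"
  unfolding essential_left_def
proof (intro conjI allI impI)
  show "left_ideal n (Fn n :: (word \<Rightarrow> 'k) set)" using Fn_ideal[where 'a = 'k] by (simp add: ideal_def)
  fix N :: "(word \<Rightarrow> 'k) set" assume N: "left_ideal n N \<and> N \<noteq> {szero}"
  hence "szero \<in> N" by (simp add: left_ideal_def)
  then obtain a where a: "a \<in> N" "a \<noteq> szero" using nz_elem N by blast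
  have aS: "a \<in> Sn n" using N a by (auto simp: left_ideal_def)
  obtain p where p: "p \<in> idx n" "smult (Ek n zz p) a \<noteq> szero" using key_left[OF aS a(2)] by blast
  have "smult (Ek n zz p) a \<in> N" using N a p by (auto simp: left_ideal_def)
  moreover have "smult (Ek n zz p) a \<in> Fn n" using Fn_right[OF aS Ek_Fn[OF zz_idx p(1)]] .
  ultimately show "Fn n \<inter> N \<noteq> {szero}" using p(2) by blast
qed

lemma ess_right_Fn: "essential_right n (Fn n :: (word \<Rightarrow> 'k::field) set)"
  unfolding essential_right_def
proof (intro conjI allI impI)
  show "right_ideal n (Fn n :: (word \<Rightarrow> 'k) set)" using Fn_ideal[where 'a = 'k] by (simp add: ideal_def)
  fix N :: "(word \<Rightarrow> 'k) set" assume N: "right_ideal n N \<and> N \<noteq> {szero}"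
  hence "szero \<in> N" by (simp add: right_ideal_def)
  then obtain a where a: "a \<in> N" "a \<noteq> szero" using nz_elem N by blast
  have aS: "a \<in> Sn n" using N a by (auto simp: right_ideal_def)
  obtain q where q: "q \<in> idx n" "smult a (Ek n q zz) \<noteq> szero" using key_right[OF aS a(2)] by blast
  have "smult a (Ek n q zz) \<in> N" using N a q by (auto simp: right_ideal_def)
  moreover have "smult a (Ek n q zz) \<in> Fn n" using Fn_left[OF aS Ek_Fn[OF q(1) zz_idx]] .
  ultimately show "Fn n \<inter> N \<noteq> {szero}" using q(2) by blast
qed

lemma ess_ideal:
  assumes I: "ideal n I" "I \<noteq> {szero :: word \<Rightarrow> 'k::field}"
  shows "essential_left n I \<and> essential_right n I"
proof -
  have F: "Fn n \<subseteq> I" by (rule Fn_min[OF I])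
  have "essential_left n I"
    unfolding essential_left_def
  proof (intro conjI allI impI)
    show "left_ideal n I" using I by (simp add: ideal_def)
    fix N :: "(word \<Rightarrow> 'k) set" assume N: "left_ideal n N \<and> N \<noteq> {szero}"
    have "Fn n \<inter> N \<noteq> {szero}" using ess_left_Fn[where 'k = 'k, of n] N by (simp add: essential_left_def)
    moreover have "szero \<in> Fn n \<inter> N" using N Fn_zero by (auto simp: left_ideal_def)
    ultimately obtain x where "x \<in> Fn n \<inter> N" "x \<noteq> szero" by blast
    thus "I \<inter> N \<noteq> {szero}" using F by blast
  qed
  moreover have "essential_right n I"
    unfolding essential_right_def
  proof (intro conjI allI impI)
    show "right_ideal n I" using I by (simp add: ideal_def)
    fix N :: "(word \<Rightarrow> 'k) set" assume N: "right_ideal n N \<and> N \<noteq> {szero}"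
    have "Fn n \<inter> N \<noteq> {szero}" using ess_right_Fn[where 'k = 'k, of n] N by (simp add: essential_right_def)
    moreover have "szero \<in> Fn n \<inter> N" using N Fn_zero by (auto simp: right_ideal_def)
    ultimately obtain x where "x \<in> Fn n \<inter> N" "x \<noteq> szero" by blast
    thus "I \<inter> N \<noteq> {szero}" using F by blast
  qed
  ultimately show ?thesis ..
qed

lemma prime: "prime_alg n TYPE('k::field)"
  unfolding prime_alg_def
proof (intro allI impI)
  fix I J :: "(word \<Rightarrow> 'k) set"
  assume h: "ideal n I \<and> ideal n J \<and> setprod I J = {szero}"
  show "I = {szero} \<or> J = {szero}"
  proof (rule ccontr)
    assume "\<not> (I = {szero} \<or> J = {szero})"
    hence "EE n \<in> I" "EE n \<in> J" using Fn_min[of n I] Fn_min[of n J] h EE_Fn by auto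
    hence "smult (EE n) (EE n) \<in> setprod I J" unfolding setprod_def by (auto intro: sspan.base)
    hence "EE n = (szero :: word \<Rightarrow> 'k)" using h by (simp add: EE_idem)
    thus False using EE_nz by blast
  qed
qed

lemma simple_bimod_Fn: "simple_bimod n (Fn n :: (word \<Rightarrow> 'k::field) set)"
  unfolding simple_bimod_def
  using Fn_ideal Fn_nz Fn_min by blast

lemma soc_bimod_Fn: "soc_bimod n = (Fn n :: (word \<Rightarrow> 'k::field) set)"
proof -
  have "{M. simple_bimod n M} = {Fn n :: (word \<Rightarrow> 'k) set}"
  proof
    show "{M. simple_bimod n M} \<subseteq> {Fn n :: (word \<Rightarrow> 'k) set}"
    proof
      fix M :: "(word \<Rightarrow> 'k) set" assume "M \<in> {M. simple_bimod n M}"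
      hence M: "ideal n M" "M \<noteq> {szero}" "\<forall>N. ideal n N \<and> N \<subseteq> M \<longrightarrow> N = {szero} \<or> N = M"
        by (auto simp: simple_bimod_def)
      have "Fn n \<subseteq> M" by (rule Fn_min[OF M(1,2)])
      hence "Fn n = M" using M(3) Fn_ideal Fn_nz by blast
      thus "M \<in> {Fn n}" by simp
    qed
    show "{Fn n :: (word \<Rightarrow> 'k) set} \<subseteq> {M. simple_bimod n M}" using simple_bimod_Fn by auto
  qed
  thus ?thesis by (simp add: soc_bimod_def sspan_Fn)
qed




lemma D_prod2:
  assumes "k \<in> idx n" "l \<in> idx n" "k' \<in> idx n" "l' \<in> idx n" "h \<in> FS"
  shows "smult (Ek n k l) (smult (Ek n k' l') h) = (if l = k' then smult (Ek n k l') h else (szero :: word \<Rightarrow> 'k::field))"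
  using assms by (subst smult_assoc[symmetric]) (simp_all add: D_prod)

lemma Ek_nz: "k \<in> idx n \<Longrightarrow> l \<in> idx n \<Longrightarrow> Ek n k l \<noteq> (szero :: word \<Rightarrow> 'k::field)"
proof
  assume kl: "k \<in> idx n" "l \<in> idx n" and h: "Ek n k l = (szero :: word \<Rightarrow> 'k)"
  have "smult (Ek n zz k) (smult (Ek n k l) (Ek n l zz)) = (EE n :: word \<Rightarrow> 'k)"
    using kl by (simp add: D_prod2 D_prod Ek_zz_zz)
  hence "(EE n :: word \<Rightarrow> 'k) = szero" using h by simp
  thus False using EE_nz by blast
qed

lemma left_ideal_inter_Fn: "left_ideal n M \<Longrightarrow> left_ideal n (M \<inter> Fn n)"
  unfolding left_ideal_def using Fn_zero Fn_add Fn_left by blast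

lemma right_ideal_inter_Fn: "right_ideal n M \<Longrightarrow> right_ideal n (M \<inter> Fn n)"
  unfolding right_ideal_def using Fn_zero Fn_add Fn_right by blast

lemma simple_left_sub:
  assumes "simple_left n (M :: (word \<Rightarrow> 'k::field) set)"
  shows "M \<subseteq> Fn n"
proof -
  have M: "left_ideal n M" "M \<noteq> {szero}" "\<forall>N. left_ideal n N \<and> N \<subseteq> M \<longrightarrow> N = {szero} \<or> N = M"
    using assms by (auto simp: simple_left_def)
  have "Fn n \<inter> M \<noteq> {szero}" using ess_left_Fn[where 'k = 'k, of n] M by (simp add: essential_left_def)
  hence "M \<inter> Fn n = M" using M(3) left_ideal_inter_Fn[OF M(1)] by (metis Int_commute inf_le1)
  thus ?thesis by blast
qed

lemma simple_right_sub:
  assumes "simple_right n (M :: (word \<Rightarrow> 'k::field) set)"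
  shows "M \<subseteq> Fn n"
proof -
  have M: "right_ideal n M" "M \<noteq> {szero}" "\<forall>N. right_ideal n N \<and> N \<subseteq> M \<longrightarrow> N = {szero} \<or> N = M"
    using assms by (auto simp: simple_right_def)
  have "Fn n \<inter> M \<noteq> {szero}" using ess_right_Fn[where 'k = 'k, of n] M by (simp add: essential_right_def)
  hence "M \<inter> Fn n = M" using M(3) right_ideal_inter_Fn[OF M(1)] by (metis Int_commute inf_le1)
  thus ?thesis by blast
qed

definition Lc :: "nat \<Rightarrow> (nat \<Rightarrow> nat) \<Rightarrow> (word \<Rightarrow> 'k::field) set" where
  "Lc n l = {smult s (Ek n zz l) | s. s \<in> Sn n}"

definition Rc :: "nat \<Rightarrow> (nat \<Rightarrow> nat) \<Rightarrow> (word \<Rightarrow> 'k::field) set" where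
  "Rc n k = {smult (Ek n k zz) s | s. s \<in> Sn n}"

lemma Lc_left: "l \<in> idx n \<Longrightarrow> left_ideal n (Lc n l :: (word \<Rightarrow> 'k::field) set)"
  unfolding left_ideal_def
proof (intro conjI ballI subsetI)
  assume l: "l \<in> idx n"
  show "x \<in> Sn n" if "x \<in> (Lc n l :: (word \<Rightarrow> 'k) set)" for x using that l by (auto simp: Lc_def)
  show "szero \<in> (Lc n l :: (word \<Rightarrow> 'k) set)" unfolding Lc_def by (rule CollectI, rule exI[of _ szero]) simp
  show "sadd a b \<in> Lc n l" if ab: "a \<in> (Lc n l :: (word \<Rightarrow> 'k) set)" "b \<in> Lc n l" for a b
  proof -
    obtain s t where st: "s \<in> Sn n" "t \<in> Sn n" "a = smult s (Ek n zz l)" "b = smult t (Ek n zz l)"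
      using ab by (auto simp: Lc_def)
    hence "sadd a b = smult (sadd s t) (Ek n zz l)" by (simp add: smult_sadd_left Sn_FS)
    moreover have "sadd s t \<in> Sn n" using st by simp
    ultimately show ?thesis unfolding Lc_def by blast
  qed
  show "smult r a \<in> Lc n l" if ra: "r \<in> Sn n" "a \<in> (Lc n l :: (word \<Rightarrow> 'k) set)" for r a
  proof -
    obtain s where s: "s \<in> Sn n" "a = smult s (Ek n zz l)" using ra by (auto simp: Lc_def)
    hence "smult r a = smult (smult r s) (Ek n zz l)" using ra by (simp add: Sn_FS)
    moreover have "smult r s \<in> Sn n" using s ra by simp
    ultimately show ?thesis unfolding Lc_def by blast
  qed
qed

lemma Rc_right: "k \<in> idx n \<Longrightarrow> right_ideal n (Rc n k :: (word \<Rightarrow> 'k::field) set)"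
  unfolding right_ideal_def
proof (intro conjI ballI subsetI)
  assume k: "k \<in> idx n"
  show "x \<in> Sn n" if "x \<in> (Rc n k :: (word \<Rightarrow> 'k) set)" for x using that k by (auto simp: Rc_def)
  show "szero \<in> (Rc n k :: (word \<Rightarrow> 'k) set)" unfolding Rc_def by (rule CollectI, rule exI[of _ szero]) simp
  show "sadd a b \<in> Rc n k" if ab: "a \<in> (Rc n k :: (word \<Rightarrow> 'k) set)" "b \<in> Rc n k" for a b
  proof -
    obtain s t where st: "s \<in> Sn n" "t \<in> Sn n" "a = smult (Ek n k zz) s" "b = smult (Ek n k zz) t"
      using ab by (auto simp: Rc_def)
    hence "sadd a b = smult (Ek n k zz) (sadd s t)" by (simp add: smult_sadd_right Sn_FS)
    moreover have "sadd s t \<in> Sn n" using st by simp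
    ultimately show ?thesis unfolding Rc_def by blast
  qed
  show "smult a r \<in> Rc n k" if ra: "r \<in> Sn n" "a \<in> (Rc n k :: (word \<Rightarrow> 'k) set)" for r a
  proof -
    obtain s where s: "s \<in> Sn n" "a = smult (Ek n k zz) s" using ra by (auto simp: Rc_def)
    hence "smult a r = smult (Ek n k zz) (smult s r)" using ra by (simp add: Sn_FS)
    moreover have "smult s r \<in> Sn n" using s ra by simp
    ultimately show ?thesis unfolding Rc_def by blast
  qed
qed

lemma Lc_simple:
  assumes l: "l \<in> idx n"
  shows "simple_left n (Lc n l :: (word \<Rightarrow> 'k::field) set)"
  unfolding simple_left_def
proof (intro conjI allI impI)
  show L: "left_ideal n (Lc n l :: (word \<Rightarrow> 'k) set)" by (rule Lc_left[OF l])
  have E: "Ek n zz l \<in> (Lc n l :: (word \<Rightarrow> 'k) set)"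
    unfolding Lc_def by (rule CollectI, rule exI[of _ sone]) simp
  thus "Lc n l \<noteq> {szero :: word \<Rightarrow> 'k}" using Ek_nz[OF zz_idx l, where 'k = 'k] by auto
  fix N :: "(word \<Rightarrow> 'k) set" assume N: "left_ideal n N \<and> N \<subseteq> Lc n l"
  show "N = {szero} \<or> N = Lc n l"
  proof (cases "N = {szero}")
    case True thus ?thesis by simp
  next
    case False
    hence "N \<noteq> {szero}" .
    moreover have "szero \<in> N" using N by (simp add: left_ideal_def)
    ultimately obtain b where b: "b \<in> N" "b \<noteq> szero" using nz_elem by blast
    then obtain s where s: "s \<in> Sn n" "b = smult s (Ek n zz l)" using N by (auto simp: Lc_def)
    have bS: "b \<in> Sn n" using s l by simp
    obtain p q where pq: "p \<in> idx n" "q \<in> idx n" "b (p, q) \<noteq> 0" "cor n p q b = sscale (b (p, q)) (EE n)"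
      using key[OF bS b(2)] by blast
    obtain c where c: "cor n p zz s = sscale c (EE n)" using cor_scalar[OF s(1) pq(1) zz_idx] by blast
    have "smult (Ek n zz p) b = smult (Ek n zz p) (smult s (smult (Ek n zz zz) (Ek n zz l)))"
      using s l by (simp add: D_prod)
    also have "\<dots> = smult (cor n p zz s) (Ek n zz l)"
      using s l by (simp add: cor_def Sn_FS)
    also have "\<dots> = sscale c (Ek n zz l)"
      using l by (simp add: c smult_sscale_left Ek_zz_zz[symmetric] D_prod)
    finally have eb: "smult (Ek n zz p) b = sscale c (Ek n zz l)" .
    have "c \<noteq> 0"
    proof
      assume "c = 0"
      hence "smult (Ek n zz p) b = szero" using eb by (simp add: sscale_def szero_def)
      hence "cor n p q b = szero" using bS by (simp add: cor_def Sn_FS smult_assoc[symmetric])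
      thus False using pq(3,4) sscale_EE_nz by metis
    qed
    have "smult (Ek n zz p) b \<in> N" using N b pq by (auto simp: left_ideal_def)
    hence "sscale (inverse c) (smult (Ek n zz p) b) \<in> N" using N left_ideal_scale by blast
    hence EN: "Ek n zz l \<in> N" using eb \<open>c \<noteq> 0\<close> by (simp add: sscale_sscale)
    have "N = Lc n l"
    proof (rule equalityI)
      show "N \<subseteq> Lc n l" using N by simp
      show "Lc n l \<subseteq> N" using N EN by (auto simp: Lc_def left_ideal_def)
    qed
    thus ?thesis by simp
  qed
qed

lemma Rc_simple:
  assumes k: "k \<in> idx n"
  shows "simple_right n (Rc n k :: (word \<Rightarrow> 'k::field) set)"
  unfolding simple_right_def
proof (intro conjI allI impI)
  show L: "right_ideal n (Rc n k :: (word \<Rightarrow> 'k) set)" by (rule Rc_right[OF k])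
  have E: "Ek n k zz \<in> (Rc n k :: (word \<Rightarrow> 'k) set)"
    unfolding Rc_def by (rule CollectI, rule exI[of _ sone]) simp
  thus "Rc n k \<noteq> {szero :: word \<Rightarrow> 'k}" using Ek_nz[OF k zz_idx, where 'k = 'k] by auto
  fix N :: "(word \<Rightarrow> 'k) set" assume N: "right_ideal n N \<and> N \<subseteq> Rc n k"
  show "N = {szero} \<or> N = Rc n k"
  proof (cases "N = {szero}")
    case True thus ?thesis by simp
  next
    case False
    hence "N \<noteq> {szero}" .
    moreover have "szero \<in> N" using N by (simp add: right_ideal_def)
    ultimately obtain b where b: "b \<in> N" "b \<noteq> szero" using nz_elem by blast
    then obtain s where s: "s \<in> Sn n" "b = smult (Ek n k zz) s" using N by (auto simp: Rc_def)
    have bS: "b \<in> Sn n" using s k by simp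
    obtain p q where pq: "p \<in> idx n" "q \<in> idx n" "b (p, q) \<noteq> 0" "cor n p q b = sscale (b (p, q)) (EE n)"
      using key[OF bS b(2)] by blast
    obtain c where c: "cor n zz q s = sscale c (EE n)" using cor_scalar[OF s(1) zz_idx pq(2)] by blast
    have "smult b (Ek n q zz) = smult (smult (Ek n k zz) (Ek n zz zz)) (smult s (Ek n q zz))"
      using s k by (simp add: D_prod Sn_FS)
    also have "\<dots> = smult (Ek n k zz) (cor n zz q s)"
      using s k by (simp add: cor_def Sn_FS)
    also have "\<dots> = sscale c (Ek n k zz)"
      using k by (simp add: c smult_sscale_right Ek_zz_zz[symmetric] D_prod)
    finally have eb: "smult b (Ek n q zz) = sscale c (Ek n k zz)" .
    have "c \<noteq> 0"
    proof
      assume "c = 0"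
      hence "smult b (Ek n q zz) = szero" using eb by (simp add: sscale_def szero_def)
      hence "cor n p q b = szero" by (simp add: cor_def)
      thus False using pq(3,4) sscale_EE_nz by metis
    qed
    have "smult b (Ek n q zz) \<in> N" using N b pq by (auto simp: right_ideal_def)
    hence "sscale (inverse c) (smult b (Ek n q zz)) \<in> N" using N right_ideal_scale by blast
    hence EN: "Ek n k zz \<in> N" using eb \<open>c \<noteq> 0\<close> by (simp add: sscale_sscale)
    have "N = Rc n k"
    proof (rule equalityI)
      show "N \<subseteq> Rc n k" using N by simp
      show "Rc n k \<subseteq> N" using N EN by (auto simp: Rc_def right_ideal_def)
    qed
    thus ?thesis by simp
  qed
qed

lemma soc_left_Fn: "soc_left n = (Fn n :: (word \<Rightarrow> 'k::field) set)"
proof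
  have "\<Union>{M. simple_left n M} \<subseteq> (Fn n :: (word \<Rightarrow> 'k) set)" using simple_left_sub by blast
  hence "sspan (\<Union>{M. simple_left n M}) \<subseteq> sspan (Fn n :: (word \<Rightarrow> 'k) set)" by (rule sspan_mono)
  thus "soc_left n \<subseteq> (Fn n :: (word \<Rightarrow> 'k) set)" by (simp add: soc_left_def sspan_Fn)
  have "Es n \<subseteq> \<Union>{M. simple_left n (M :: (word \<Rightarrow> 'k) set)}"
  proof
    fix x :: "word \<Rightarrow> 'k" assume "x \<in> Es n"
    then obtain k l where kl: "k \<in> idx n" "l \<in> idx n" "x = Ek n k l" by (auto simp: Es_def)
    have "x = smult (Ek n k zz) (Ek n zz l)" using kl by (simp add: D_prod)
    hence "x \<in> Lc n l" using kl unfolding Lc_def by auto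
    thus "x \<in> \<Union>{M. simple_left n M}" using Lc_simple[OF kl(2)] by blast
  qed
  hence "sspan (Es n) \<subseteq> sspan (\<Union>{M. simple_left n (M :: (word \<Rightarrow> 'k) set)})" by (rule sspan_mono)
  thus "(Fn n :: (word \<Rightarrow> 'k) set) \<subseteq> soc_left n" by (simp add: soc_left_def Fn_eq)
qed

lemma soc_right_Fn: "soc_right n = (Fn n :: (word \<Rightarrow> 'k::field) set)"
proof
  have "\<Union>{M. simple_right n M} \<subseteq> (Fn n :: (word \<Rightarrow> 'k) set)" using simple_right_sub by blast
  hence "sspan (\<Union>{M. simple_right n M}) \<subseteq> sspan (Fn n :: (word \<Rightarrow> 'k) set)" by (rule sspan_mono)
  thus "soc_right n \<subseteq> (Fn n :: (word \<Rightarrow> 'k) set)" by (simp add: soc_right_def sspan_Fn)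
  have "Es n \<subseteq> \<Union>{M. simple_right n (M :: (word \<Rightarrow> 'k) set)}"
  proof
    fix x :: "word \<Rightarrow> 'k" assume "x \<in> Es n"
    then obtain k l where kl: "k \<in> idx n" "l \<in> idx n" "x = Ek n k l" by (auto simp: Es_def)
    have "x = smult (Ek n k zz) (Ek n zz l)" using kl by (simp add: D_prod)
    hence "x \<in> Rc n k" using kl unfolding Rc_def by auto
    thus "x \<in> \<Union>{M. simple_right n M}" using Rc_simple[OF kl(1)] by blast
  qed
  hence "sspan (Es n) \<subseteq> sspan (\<Union>{M. simple_right n (M :: (word \<Rightarrow> 'k) set)})" by (rule sspan_mono)
  thus "(Fn n :: (word \<Rightarrow> 'k) set) \<subseteq> soc_right n" by (simp add: soc_right_def Fn_eq)
qed




lemma centre_eq: "centre n = range (\<lambda>c::'k::field. sscale c sone)"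
proof
  show "range (\<lambda>c::'k. sscale c sone) \<subseteq> centre n"
  proof
    fix x :: "word \<Rightarrow> 'k" assume "x \<in> range (\<lambda>c. sscale c sone)"
    then obtain c where c: "x = sscale c sone" by blast
    have "\<forall>b\<in>Sn n. smult x b = smult b x"
      using c by (auto simp: smult_sscale_left smult_sscale_right Sn_FS)
    thus "x \<in> centre n" using c by (simp add: centre_def)
  qed
  show "centre n \<subseteq> range (\<lambda>c::'k. sscale c sone)"
  proof
    fix a :: "word \<Rightarrow> 'k" assume "a \<in> centre n"
    hence a: "a \<in> Sn n" "\<And>x. x \<in> Sn n \<Longrightarrow> smult a x = smult x a" by (auto simp: centre_def)
    define \<alpha> where "\<alpha> = a (zz, zz)"
    define b where "b = ssub a (sscale \<alpha> sone)"
    have bS: "b \<in> Sn n" using a by (simp add: b_def)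
    have bc: "smult b x = smult x b" if x: "x \<in> Sn n" for x
    proof -
      have "smult b x = ssub (smult a x) (sscale \<alpha> x)"
        using a x by (simp add: b_def smult_ssub_left smult_sscale_left Sn_FS)
      also have "\<dots> = ssub (smult x a) (sscale \<alpha> x)" using a(2)[OF x] by simp
      also have "\<dots> = smult x b"
        using a x by (simp add: b_def smult_ssub_right smult_sscale_right Sn_FS)
      finally show ?thesis .
    qed
    have b0: "b (zz, zz) = 0" by (simp add: b_def ssub_def sscale_def sone_def \<alpha>_def)
    have "b = szero"
    proof (rule ccontr)
      assume bn: "b \<noteq> szero"
      obtain p q where pq: "p \<in> idx n" "q \<in> idx n" "b (p, q) \<noteq> 0" "cor n p q b = sscale (b (p, q)) (EE n)"
        using key[OF bS bn] by blast
      have "cor n p q b = smult (Ek n zz p) (smult (Ek n q zz) b)"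
        using bc[of "Ek n q zz"] pq by (simp add: cor_def)
      also have "\<dots> = smult (smult (Ek n zz p) (Ek n q zz)) b" using bS by (simp add: Sn_FS)
      also have "\<dots> = (if p = q then smult (EE n) b else szero)"
        using pq by (simp add: D_prod Ek_zz_zz)
      finally have cq: "cor n p q b = (if p = q then smult (EE n) b else szero)" .
      show False
      proof (cases "p = q")
        case False
        thus False using cq pq(3,4) sscale_EE_nz by (metis (full_types))
      next
        case True
        hence eb: "smult (EE n) b = sscale (b (p, q)) (EE n)" using cq pq(4) by simp
        have "smult (EE n) (smult b (EE n)) = sscale (b (zz, zz)) (EE n)" by (rule cor_zz[OF bS])
        also have "\<dots> = szero" using b0 by (simp add: sscale_def szero_def)
        finally have z: "smult (EE n) (smult b (EE n)) = szero" .
        have "smult (EE n) (smult b (EE n)) = smult (EE n) (smult (EE n) b)" using bc[of "EE n"] by simp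
        also have "\<dots> = smult (EE n) b" using bS by (simp add: EE_idem2 Sn_FS)
        finally have "smult (EE n) b = szero" using z by simp
        thus False using eb pq(3) sscale_EE_nz by metis
      qed
    qed
    hence "a = sscale \<alpha> sone" by (auto simp: b_def ssub_def szero_def fun_eq_iff sscale_def)
    thus "a \<in> range (\<lambda>c. sscale c sone)" by blast
  qed
qed

theorem proposition4p1:
  fixes n :: nat
  assumes "n \<ge> 1"
  shows "(centre n = range (\<lambda>c::'k::field. sscale c sone))
    \<and> (\<forall>a \<in> Sn n. a \<noteq> (szero :: word \<Rightarrow> 'k::field) \<longrightarrow>
           (\<exists>f \<in> Fn n. smult f a \<noteq> szero) \<and> (\<exists>f \<in> Fn n. smult a f \<noteq> szero))
    \<and> (ideal n (Fn n :: (word \<Rightarrow> 'k::field) set) \<and> Fn n \<noteq> {szero}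
         \<and> (\<forall>I :: (word \<Rightarrow> 'k) set. ideal n I \<and> I \<noteq> {szero} \<longrightarrow> Fn n \<subseteq> I))
    \<and> (setprod (Fn n) (Fn n) = (Fn n :: (word \<Rightarrow> 'k::field) set))
    \<and> (essential_left n (Fn n :: (word \<Rightarrow> 'k::field) set) \<and> essential_right n (Fn n :: (word \<Rightarrow> 'k) set))
    \<and> (soc_left n = (Fn n :: (word \<Rightarrow> 'k::field) set) \<and> soc_right n = (Fn n :: (word \<Rightarrow> 'k) set))
    \<and> (soc_bimod n = (Fn n :: (word \<Rightarrow> 'k::field) set) \<and> simple_bimod n (Fn n :: (word \<Rightarrow> 'k) set))
    \<and> (prime_alg n TYPE('k::field))
    \<and> (\<forall>I :: (word \<Rightarrow> 'k::field) set. ideal n I \<and> I \<noteq> {szero} \<longrightarrow> essential_left n I \<and> essential_right n I)"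
proof -
  have 1: "centre n = range (\<lambda>c::'k. sscale c sone)" by (rule centre_eq)
  have 2: "\<forall>a \<in> Sn n. a \<noteq> (szero :: word \<Rightarrow> 'k) \<longrightarrow>
           (\<exists>f \<in> Fn n. smult f a \<noteq> szero) \<and> (\<exists>f \<in> Fn n. smult a f \<noteq> szero)" by (rule part2)
  have 3: "ideal n (Fn n :: (word \<Rightarrow> 'k) set)" by (rule Fn_ideal)
  have 4: "Fn n \<noteq> {szero :: word \<Rightarrow> 'k}" by (rule Fn_nz)
  have 5: "\<forall>I :: (word \<Rightarrow> 'k) set. ideal n I \<and> I \<noteq> {szero} \<longrightarrow> Fn n \<subseteq> I"
    using Fn_min by blast
  have 6: "setprod (Fn n) (Fn n) = (Fn n :: (word \<Rightarrow> 'k) set)" by (rule setprod_Fn)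
  have 7: "essential_left n (Fn n :: (word \<Rightarrow> 'k) set)" by (rule ess_left_Fn)
  have 8: "essential_right n (Fn n :: (word \<Rightarrow> 'k) set)" by (rule ess_right_Fn)
  have 9: "soc_left n = (Fn n :: (word \<Rightarrow> 'k) set)" by (rule soc_left_Fn)
  have 10: "soc_right n = (Fn n :: (word \<Rightarrow> 'k) set)" by (rule soc_right_Fn)
  have 11: "soc_bimod n = (Fn n :: (word \<Rightarrow> 'k) set)" by (rule soc_bimod_Fn)
  have 12: "simple_bimod n (Fn n :: (word \<Rightarrow> 'k) set)" by (rule simple_bimod_Fn)
  have 13: "prime_alg n TYPE('k)" by (rule prime)
  have 14: "\<forall>I :: (word \<Rightarrow> 'k) set. ideal n I \<and> I \<noteq> {szero} \<longrightarrow> essential_left n I \<and> essential_right n I"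
    using ess_ideal by blast
  show ?thesis using 1 2 3 4 5 6 7 8 9 10 11 12 13 14 by (intro conjI) (simp_all add: Fn_nz)
qed


end
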